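(* Let $n\ge2k$, $\mathbf A_k\in\{\mathbf{TL}_k(n),\mathbf M_k(n),\mathbf{PR}_k\}$, $\lambda=[n-m,m]\in\Lambda^{\mathbf A_k}_n$, and let $r,s\ge0$ with $r+2s=k$ (for $\mathbf{TL}_k(n)$) or $r+s=k$ (otherwise). Then $\chi^\lambda_{\mathbf A_k}(\mathbf 1_r\otimes e^{\otimes s})=\mathsf F^{m,r}_{\mathbf A_k}$, where (a) $\mathsf F^{m,r}_{\mathbf{TL}_k(n)}=\binom{r}{\frac{r-m}{2}}-\binom{r}{\frac{r-m}{2}-1}$; (b) $\mathsf F^{m,r}_{\mathbf M_k(n)}=\sum_{t\ge0}\binom{r}{m+2t}\left(\binom{m+2t}{t}-\binom{m+2t}{t-1}\right)$; (c) $\mathsf F^{m,r}_{\mathbf{PR}_k}=\binom{r}{m}$.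
   Context: $\mathcal P_k$: set partitions of $\{1,\dots,k,1',\dots,k'\}$ (blocks), top row $1..k$, bottom row $1'..k'$; $\mathbf P_k(n)$ has basis $\mathcal P_k$ and product $d_1d_2=n^{\ell(d_1,d_2)}d_1\circ d_2$ (concatenation discarding $\ell$ components lying in the middle). Planar = drawable without crossings inside the rectangle of vertices. $\mathbf{TL}_k(n)$, $\mathbf M_k(n)$, $\mathbf{PR}_k$ are spanned by the planar diagrams all of whose blocks have size 2; size 1 or 2; resp. at most one vertex in each row. $\Lambda^{\mathbf A_k}_n=\{[n-m,m]:0\le m\le k\}$ for $\mathbf M_k,\mathbf{PR}_k$, and with $m\equiv k\bmod 2$ for $\mathbf{TL}_k$. The irreducible module $\mathbf A^\lambda_k$ has basis the symmetric $m$-diagrams in the algebra (a symmetric $m$-diagram is given by a set partition of $\{1..k\}$ with $m$ distinguished blocks $B$, and has blocks $B\cup B'$ for these and $B,B'$ otherwise), with action $d\cdot w=n^{\ell(d,w)}d\circ w\circ d^T$ if this has $m$ propagating blocks, else $0$ ($d^T$ = reflection); $\chi^\lambda_{\mathbf A_k}$ is its character. $\mathbf 1_r$ is the identity diagram in $\mathcal P_r$; $\otimes$ juxtaposes diagrams; $e=\frac1n\mathfrak e_1$ (blocks $\{1,2\},\{1',2'\}$) for $\mathbf{TL}_k$ and $e=\frac1n\mathfrak p_1$ (blocks $\{1\},\{1'\}$) otherwise. Binomial coefficients with negative or too large lower index are $0$. *)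

theory Defs
  imports Complex_Main "HOL-Library.Disjoint_Sets"
begin

text \<open>Vertices: (True,i) is the top vertex i, (False,i) is the bottom vertex i'.\<close>
type_synonym vtx = "bool \<times> nat"
type_synonym diagram = "vtx set set"

definition verts :: "nat \<Rightarrow> vtx set" where
  "verts k = UNIV \<times> {1..k}"

definition Pk :: "nat \<Rightarrow> diagram set" where
  "Pk k = {d. partition_on (verts k) d}"

text \<open>Composition: d1 on top of d2, bottom row of d1 identified with top row of d2.
  Vertices of the stacked picture: (0,i) top, (1,i) middle, (2,i) bottom.\<close>
fun up3 :: "vtx \<Rightarrow> nat \<times> nat" where
  "up3 (b,i) = (if b then (0,i) else (1,i))"
fun dn3 :: "vtx \<Rightarrow> nat \<times> nat" where
  "dn3 (b,i) = (if b then (1,i) else (2,i))"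
fun back3 :: "nat \<times> nat \<Rightarrow> vtx" where
  "back3 (r,i) = (r = 0, i)"

definition stack_verts :: "diagram \<Rightarrow> diagram \<Rightarrow> (nat \<times> nat) set" where
  "stack_verts d1 d2 = (\<Union>B\<in>d1. up3 ` B) \<union> (\<Union>B\<in>d2. dn3 ` B)"

definition stack_rel :: "diagram \<Rightarrow> diagram \<Rightarrow> ((nat \<times> nat) \<times> (nat \<times> nat)) set" where
  "stack_rel d1 d2 = {(x,y). (\<exists>B\<in>d1. x \<in> up3 ` B \<and> y \<in> up3 ` B) \<or>
                              (\<exists>B\<in>d2. x \<in> dn3 ` B \<and> y \<in> dn3 ` B)}"

definition components :: "diagram \<Rightarrow> diagram \<Rightarrow> (nat \<times> nat) set set" where
  "components d1 d2 = stack_verts d1 d2 // ((stack_rel d1 d2)\<^sup>*)"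

definition comp_diag :: "diagram \<Rightarrow> diagram \<Rightarrow> diagram" where
  "comp_diag d1 d2 = {back3 ` (C \<inter> {v. fst v \<noteq> 1}) | C.
       C \<in> components d1 d2 \<and> C \<inter> {v. fst v \<noteq> 1} \<noteq> {}}"

definition ell :: "diagram \<Rightarrow> diagram \<Rightarrow> nat" where
  "ell d1 d2 = card {C \<in> components d1 d2. C \<subseteq> {v. fst v = 1}}"

definition transp_diag :: "diagram \<Rightarrow> diagram" where
  "transp_diag d = (\<lambda>B. (\<lambda>(b,i). (\<not> b, i)) ` B) ` d"

text \<open>Planarity: with vertices placed on a circle in the order 1,...,k,k',...,1',
  no two distinct blocks cross.\<close>
fun cpos :: "nat \<Rightarrow> vtx \<Rightarrow> nat" where
  "cpos k (b,i) = (if b then i else 2*k + 1 - i)"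

definition planar :: "nat \<Rightarrow> diagram \<Rightarrow> bool" where
  "planar k d \<longleftrightarrow> (\<forall>B1\<in>d. \<forall>B2\<in>d. B1 \<noteq> B2 \<longrightarrow>
     \<not> (\<exists>a\<in>B1. \<exists>c\<in>B1. \<exists>b\<in>B2. \<exists>e\<in>B2.
          cpos k a < cpos k b \<and> cpos k b < cpos k c \<and> cpos k c < cpos k e))"

datatype alg = TL | Motzkin | PlanarRook

definition in_alg :: "alg \<Rightarrow> nat \<Rightarrow> diagram \<Rightarrow> bool" where
  "in_alg A k d \<longleftrightarrow> d \<in> Pk k \<and> planar k d \<and>
     (case A of
        TL \<Rightarrow> (\<forall>B\<in>d. card B = 2)
      | Motzkin \<Rightarrow> (\<forall>B\<in>d. card B = 1 \<or> card B = 2)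
      | PlanarRook \<Rightarrow> (\<forall>B\<in>d. card {i. (True,i) \<in> B} \<le> 1 \<and> card {i. (False,i) \<in> B} \<le> 1))"

definition nprop :: "diagram \<Rightarrow> nat" where
  "nprop d = card {B\<in>d. (\<exists>i. (True,i) \<in> B) \<and> (\<exists>i. (False,i) \<in> B)}"

definition sym_diag :: "nat \<Rightarrow> nat \<Rightarrow> diagram \<Rightarrow> bool" where
  "sym_diag k m d \<longleftrightarrow> (\<exists>\<pi> S. partition_on {1..k} \<pi> \<and> S \<subseteq> \<pi> \<and> card S = m \<and>
     d = {(Pair True ` B) \<union> (Pair False ` B) | B. B \<in> S}
         \<union> {Pair True ` B | B. B \<in> \<pi> - S} \<union> {Pair False ` B | B. B \<in> \<pi> - S})"

text \<open>Basis of the irreducible module A_k^\<lambda>, \<lambda> = [n-m,m].\<close>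
definition module_basis :: "alg \<Rightarrow> nat \<Rightarrow> nat \<Rightarrow> diagram set" where
  "module_basis A k m = {w. sym_diag k m w \<and> in_alg A k w}"

text \<open>Coefficient of w in d \<cdot> w.\<close>
definition act_coeff :: "real \<Rightarrow> nat \<Rightarrow> diagram \<Rightarrow> diagram \<Rightarrow> diagram \<Rightarrow> real" where
  "act_coeff n m d w w' =
     (let u = comp_diag (comp_diag d w) (transp_diag d) in
      if nprop u = m \<and> u = w' then n ^ ell d w else 0)"

definition diag_trace :: "alg \<Rightarrow> nat \<Rightarrow> real \<Rightarrow> nat \<Rightarrow> diagram \<Rightarrow> real" where
  "diag_trace A k n m d = (\<Sum>w\<in>module_basis A k m. act_coeff n m d w w)"

text \<open>Algebra elements: real linear combinations of diagrams (coefficient functions);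
  the character is the linear extension of the trace.\<close>
definition character :: "alg \<Rightarrow> nat \<Rightarrow> real \<Rightarrow> nat \<Rightarrow> (diagram \<Rightarrow> real) \<Rightarrow> real" where
  "character A k n m x = (\<Sum>d\<in>{d. in_alg A k d}. x d * diag_trace A k n m d)"

text \<open>Juxtaposition of diagrams (d1 has a vertices per row).\<close>
definition juxt :: "nat \<Rightarrow> diagram \<Rightarrow> diagram \<Rightarrow> diagram" where
  "juxt a d1 d2 = d1 \<union> (\<lambda>B. (\<lambda>(b,i). (b, i + a)) ` B) ` d2"

definition id_diag :: "nat \<Rightarrow> diagram" where
  "id_diag r = {{(True,i),(False,i)} | i. i \<in> {1..r}}"

text \<open>The diagram underlying e (e = (1/n) e_1 for TL, e = (1/n) p_1 otherwise) and its width.\<close>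
definition e_diag :: "alg \<Rightarrow> diagram" where
  "e_diag A = (case A of TL \<Rightarrow> {{(True,1),(True,2)},{(False,1),(False,2)}}
                        | _ \<Rightarrow> {{(True,1)},{(False,1)}})"

definition e_width :: "alg \<Rightarrow> nat" where
  "e_width A = (case A of TL \<Rightarrow> 2 | _ \<Rightarrow> 1)"

fun e_pow_diag :: "alg \<Rightarrow> nat \<Rightarrow> diagram" where
  "e_pow_diag A 0 = {}"
| "e_pow_diag A (Suc s) = juxt (e_width A) (e_diag A) (e_pow_diag A s)"

definition one_tensor_e :: "alg \<Rightarrow> real \<Rightarrow> nat \<Rightarrow> nat \<Rightarrow> (diagram \<Rightarrow> real)" where
  "one_tensor_e A n r s =
     (\<lambda>d. if d = juxt r (id_diag r) (e_pow_diag A s) then (1 / n) ^ s else 0)"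

definition binomZ :: "nat \<Rightarrow> int \<Rightarrow> int" where
  "binomZ r j = (if j < 0 then 0 else int (r choose nat j))"

definition F_val :: "alg \<Rightarrow> nat \<Rightarrow> nat \<Rightarrow> int" where
  "F_val A m r = (case A of
      TL \<Rightarrow> binomZ r ((int r - int m) div 2) - binomZ r ((int r - int m) div 2 - 1)
    | Motzkin \<Rightarrow> (\<Sum>t\<le>r. binomZ r (int (m + 2*t)) *
                    (binomZ (m + 2*t) (int t) - binomZ (m + 2*t) (int t - 1)))
    | PlanarRook \<Rightarrow> binomZ r (int m))"

text \<open>Index set \<Lambda>_n^{A_k}: the admissible m (\<lambda> = [n-m,m]).\<close>
definition admissible_m :: "alg \<Rightarrow> nat \<Rightarrow> nat \<Rightarrow> bool" where
  "admissible_m A k m \<longleftrightarrow> m \<le> k \<and> (A = TL \<longrightarrow> m mod 2 = k mod 2)"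

end

theory Submission
  imports Defs
begin

fun cnt :: "alg \<Rightarrow> nat \<Rightarrow> nat \<Rightarrow> nat" where
  "cnt A 0 m = (if m = 0 then 1 else 0)"
| "cnt A (Suc r) m = (if m \<ge> 1 then cnt A r (m-1) else 0) + (if A = TL then 0 else cnt A r m)
     + (if A = PlanarRook then 0 else cnt A r (Suc m))"

lemma binomZ_Suc: "binomZ (Suc r) j = binomZ r j + binomZ r (j-1)"
proof -
  consider "j < 0" | "j = 0" | "j > 0" by linarith
  then show ?thesis
  proof cases
    case 3
    then obtain i where "j = int (Suc i)" by (metis gr0_implies_Suc pos_int_cases zero_less_imp_eq_int)
    then have "nat (j-1) = i" "nat j = Suc i" by auto
    then show ?thesis using \<open>j > 0\<close> by (simp add: binomZ_def)
  qed (auto simp: binomZ_def)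
qed

lemma cnt_TL_odd: "odd (r+m) \<Longrightarrow> cnt TL r m = 0"
  by (induction r arbitrary: m) (auto simp: odd_pos)

lemma cnt_TL: "even (r+m) \<Longrightarrow>
  int (cnt TL r m) = binomZ r ((int r - int m) div 2) - binomZ r ((int r - int m) div 2 - 1)"
proof (induction r arbitrary: m)
  case 0
  then show ?case by (auto simp: binomZ_def)
next
  case (Suc r)
  define q where "q = (int (Suc r) - int m) div 2"
  have ev: "even (int (Suc r) - int m)" using Suc.prems by (simp add: even_add)
  show ?case
  proof (cases "m \<ge> 1")
    case True
    have e1: "even (r + (m-1))" using Suc.prems True by (simp add: even_add)
    have e2: "even (r + Suc m)" using Suc.prems by simp
    have q1: "(int r - int (m-1)) div 2 = q" using True unfolding q_def by (simp add: of_nat_diff)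
    have q2: "(int r - int (Suc m)) div 2 = q - 1" unfolding q_def using ev by (auto elim!: evenE simp: algebra_simps)
    have "int (cnt TL (Suc r) m) = int (cnt TL r (m-1)) + int (cnt TL r (Suc m))" using True by simp
    also have "\<dots> = (binomZ r q - binomZ r (q-1)) + (binomZ r (q-1) - binomZ r (q-1-1))"
      using Suc.IH[OF e1] Suc.IH[OF e2] q1 q2 by simp
    also have "\<dots> = binomZ (Suc r) q - binomZ (Suc r) (q-1)"
      by (simp add: binomZ_Suc)
    finally show ?thesis unfolding q_def .
  next
    case False
    then have m0: "m = 0" by simp
    have e2: "even (r + Suc m)" using Suc.prems by simp
    have q2: "(int r - int (Suc m)) div 2 = q - 1" unfolding q_def using ev by (auto elim!: evenE simp: algebra_simps)
    obtain p where p: "Suc r = 2*p" using Suc.prems m0 by (metis add_0_right evenE)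
    have qp: "q = int p" unfolding q_def using p m0 by simp
    have pos: "p \<ge> 1" using p by simp
    have sym: "binomZ r q = binomZ r (q-1)"
    proof -
      have "r = p + (p-1)" using p pos by simp
      then have "r choose p = r choose (p-1)"
        by (metis add_diff_cancel_left' binomial_symmetric le_add1)
      then show ?thesis using qp pos by (simp add: binomZ_def of_nat_diff nat_diff_distrib)
    qed
    have "int (cnt TL (Suc r) m) = int (cnt TL r (Suc m))" using m0 by simp
    also have "\<dots> = binomZ r (q-1) - binomZ r (q-1-1)"
      using Suc.IH[OF e2] q2 by simp
    also have "\<dots> = binomZ (Suc r) q - binomZ (Suc r) (q-1)"
      using sym by (simp add: binomZ_Suc)
    finally show ?thesis unfolding q_def .
  qed
qed

lemma cnt_PR: "cnt PlanarRook r m = r choose m"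
proof (induction r arbitrary: m)
  case (Suc r)
  then show ?case by (cases m) auto
qed simp

lemma cnt_M: "cnt Motzkin r m = (\<Sum>j\<le>r. (r choose j) * cnt TL j m)"
proof (induction r arbitrary: m)
  case 0
  then show ?case by simp
next
  case (Suc r)
  have "(\<Sum>j\<le>Suc r. (Suc r choose j) * cnt TL j m)
      = (\<Sum>j\<le>Suc r. (r choose j) * cnt TL j m) + (\<Sum>j\<le>Suc r. (if j = 0 then 0 else (r choose (j-1)) * cnt TL j m))"
  proof (subst sum.distrib[symmetric], rule sum.cong)
    fix x assume "x \<in> {..Suc r}"
    show "(Suc r choose x) * cnt TL x m = (r choose x) * cnt TL x m + (if x = 0 then 0 else (r choose (x - 1)) * cnt TL x m)"
      by (cases x) (auto simp: algebra_simps)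
  qed simp
  also have "(\<Sum>j\<le>Suc r. (r choose j) * cnt TL j m) = (\<Sum>j\<le>r. (r choose j) * cnt TL j m)"
    by simp
  also have "(\<Sum>j\<le>Suc r. (if j = 0 then 0 else (r choose (j-1)) * cnt TL j m))
     = (\<Sum>i\<le>r. (r choose i) * cnt TL (Suc i) m)"
    by (subst sum.atMost_Suc_shift) simp
  also have "\<dots> = (\<Sum>i\<le>r. (if m \<ge> 1 then (r choose i) * cnt TL i (m-1) else 0) + (r choose i) * cnt TL i (Suc m))"
    by (rule sum.cong) (auto simp: algebra_simps)
  also have "\<dots> = (if m \<ge> 1 then cnt Motzkin r (m-1) else 0) + cnt Motzkin r (Suc m)"
    by (simp add: sum.distrib Suc.IH)
  finally show ?case by (simp add: Suc.IH)
qed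

lemma binomZ_int[simp]: "binomZ r (int x) = int (r choose x)"
  by (simp add: binomZ_def)

lemma cnt_lt: "r < m \<Longrightarrow> cnt A r m = 0"
  by (induction r arbitrary: m) auto

lemma F_val_cnt:
  assumes "A = TL \<Longrightarrow> even (r+m)"
  shows "F_val A m r = int (cnt A r m)"
proof (cases A)
  case TL
  then show ?thesis using cnt_TL[of r m] assms by (simp add: F_val_def)
next
  case PlanarRook
  then show ?thesis by (simp add: F_val_def cnt_PR binomZ_def)
next
  case Motzkin
  define f where "f j = (r choose j) * cnt TL j m" for j
  define g where "g t = m + 2*t" for t :: nat
  have tm: "binomZ r (int (m + 2*t)) * (binomZ (m + 2*t) (int t) - binomZ (m + 2*t) (int t - 1)) = int (f (g t))" for t
  proof -
    have "int (cnt TL (m+2*t) m) = binomZ (m + 2*t) (int t) - binomZ (m + 2*t) (int t - 1)"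
      using cnt_TL[of "m+2*t" m] by simp
    then show ?thesis unfolding f_def g_def by (simp del: of_nat_add)
  qed
  have inj: "inj g" unfolding g_def by (auto simp: inj_def)
  have "(\<Sum>t\<le>r. f (g t)) = (\<Sum>j\<in>g ` {..r}. f j)"
    by (simp add: sum.reindex inj_on_subset[OF inj])
  also have "\<dots> = (\<Sum>j\<le>m+2*r. f j)"
  proof (rule sum.mono_neutral_left)
    show "g ` {..r} \<subseteq> {..m+2*r}" unfolding g_def by auto
    show "\<forall>i\<in>{..m + 2 * r} - g ` {..r}. f i = 0"
    proof
      fix j assume j: "j \<in> {..m + 2 * r} - g ` {..r}"
      show "f j = 0"
      proof (cases "j < m")
        case True then show ?thesis by (simp add: f_def cnt_lt)
      next
        case False
        show ?thesis
        proof (cases "odd (j+m)")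
          case True then show ?thesis by (simp add: f_def cnt_TL_odd)
        next
          case False
          then have "even (j - m)" using \<open>\<not> j < m\<close> by auto
          then obtain t where t: "j - m = 2*t" by (metis evenE)
          then have "j = g t" using \<open>\<not> j < m\<close> unfolding g_def by simp
          moreover have "t \<le> r" using j t by auto
          ultimately show ?thesis using j by auto
        qed
      qed
    qed
  qed simp
  also have "\<dots> = (\<Sum>j\<le>r. f j)"
    by (rule sum.mono_neutral_right) (auto simp: f_def)
  finally have "(\<Sum>t\<le>r. f (g t)) = cnt Motzkin r m" unfolding f_def by (simp add: cnt_M)
  then have "int (cnt Motzkin r m) = (\<Sum>t\<le>r. int (f (g t)))" by (metis of_nat_sum)
  also have "\<dots> = (\<Sum>t\<le>r. binomZ r (int (m + 2*t)) * (binomZ (m + 2*t) (int t) - binomZ (m + 2*t) (int t - 1)))"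
    by (simp only: tm)
  finally show ?thesis using Motzkin unfolding F_val_def by simp
qed

lemma pon_iff: "partition_on A P \<longleftrightarrow> (\<forall>B\<in>P. B \<noteq> {} \<and> B \<subseteq> A) \<and> (\<forall>x\<in>A. \<exists>B\<in>P. x\<in>B)
   \<and> (\<forall>B1\<in>P. \<forall>B2\<in>P. \<forall>x. x\<in>B1 \<longrightarrow> x\<in>B2 \<longrightarrow> B1 = B2)"
  unfolding partition_on_def disjoint_def by blast

definition sz :: "alg \<Rightarrow> nat \<Rightarrow> bool" where
  "sz A c = (case A of TL \<Rightarrow> c = 2 | Motzkin \<Rightarrow> c = 1 \<or> c = 2 | PlanarRook \<Rightarrow> c = 1)"

definition noncross :: "nat set set \<Rightarrow> bool" where
  "noncross P \<longleftrightarrow> (\<forall>B1\<in>P. \<forall>B2\<in>P. B1 \<noteq> B2 \<longrightarrow>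
      \<not>(\<exists>a\<in>B1. \<exists>c\<in>B1. \<exists>b\<in>B2. \<exists>e\<in>B2. a<b \<and> b<c \<and> c<e))"

definition noencl :: "nat set set \<Rightarrow> nat set set \<Rightarrow> bool" where
  "noencl P S \<longleftrightarrow> (\<forall>B\<in>P-S. \<forall>j. {j}\<in>S \<longrightarrow> \<not>(\<exists>a\<in>B. \<exists>c\<in>B. a<j \<and> j<c))"

definition good :: "alg \<Rightarrow> nat \<Rightarrow> nat set set \<Rightarrow> nat set set \<Rightarrow> bool" where
  "good A r P S \<longleftrightarrow> partition_on {1..r} P \<and> S \<subseteq> P \<and> (\<forall>B\<in>S. card B = 1)
     \<and> (\<forall>B\<in>P-S. sz A (card B)) \<and> noncross P \<and> noencl P S"

definition GG :: "alg \<Rightarrow> nat \<Rightarrow> nat \<Rightarrow> (nat set set \<times> nat set set) set" where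
  "GG A r m = {(P,S). good A r P S \<and> card S = m}"

lemma card1_iff: "card B = 1 \<longleftrightarrow> (\<exists>x. B = {x})"
  by (simp add: card_Suc_eq)

lemma card2_iff: "card B = 2 \<longleftrightarrow> (\<exists>x y. x \<noteq> y \<and> B = {x,y})"
  by (metis card_2_iff)

lemma noncrossD: "noncross P \<Longrightarrow> B1\<in>P \<Longrightarrow> B2\<in>P \<Longrightarrow> B1\<noteq>B2 \<Longrightarrow> a\<in>B1 \<Longrightarrow> c\<in>B1
   \<Longrightarrow> b\<in>B2 \<Longrightarrow> e\<in>B2 \<Longrightarrow> a<b \<Longrightarrow> b<c \<Longrightarrow> c<e \<Longrightarrow> False"
proof -
  assume h: "noncross P" "B1\<in>P" "B2\<in>P" "B1\<noteq>B2" "a\<in>B1" "c\<in>B1" "b\<in>B2" "e\<in>B2" "a<b" "b<c" "c<e"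
  have "\<not>(\<exists>a\<in>B1. \<exists>c\<in>B1. \<exists>b\<in>B2. \<exists>e\<in>B2. a<b \<and> b<c \<and> c<e)"
    by (rule h(1)[unfolded noncross_def, THEN bspec, OF h(2), THEN bspec, OF h(3), THEN mp, OF h(4)])
  moreover have "\<exists>a\<in>B1. \<exists>c\<in>B1. \<exists>b\<in>B2. \<exists>e\<in>B2. a<b \<and> b<c \<and> c<e"
    by (intro bexI conjI; fact)
  ultimately show False by (rule notE)
qed

lemma noncrossI: "(\<And>B1 B2 a b c e. B1\<in>P \<Longrightarrow> B2\<in>P \<Longrightarrow> B1\<noteq>B2 \<Longrightarrow> a\<in>B1 \<Longrightarrow> c\<in>B1
   \<Longrightarrow> b\<in>B2 \<Longrightarrow> e\<in>B2 \<Longrightarrow> a<b \<Longrightarrow> b<c \<Longrightarrow> c<e \<Longrightarrow> False) \<Longrightarrow> noncross P"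
  unfolding noncross_def by (intro ballI impI notI, elim bexE conjE) metis

lemma noenclD: "noencl P S \<Longrightarrow> B\<in>P \<Longrightarrow> B \<notin> S \<Longrightarrow> {j}\<in>S \<Longrightarrow> a\<in>B \<Longrightarrow> c\<in>B \<Longrightarrow> a<j \<Longrightarrow> j<c \<Longrightarrow> False"
proof -
  assume h: "noencl P S" "B\<in>P" "B \<notin> S" "{j}\<in>S" "a\<in>B" "c\<in>B" "a<j" "j<c"
  have "\<not>(\<exists>a\<in>B. \<exists>c\<in>B. a<j \<and> j<c)"
    by (rule h(1)[unfolded noencl_def, THEN bspec, OF DiffI[OF h(2) h(3)], THEN spec, THEN mp, OF h(4)])
  moreover have "\<exists>a\<in>B. \<exists>c\<in>B. a<j \<and> j<c"
    by (intro bexI conjI; fact)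
  ultimately show False by (rule notE)
qed

lemma noenclI: "(\<And>B j a c. B\<in>P \<Longrightarrow> B \<notin> S \<Longrightarrow> {j}\<in>S \<Longrightarrow> a\<in>B \<Longrightarrow> c\<in>B \<Longrightarrow> a<j \<Longrightarrow> j<c \<Longrightarrow> False) \<Longrightarrow> noencl P S"
  unfolding noencl_def by (intro ballI allI impI notI, elim bexE conjE) auto

lemma noncross_mono: "noncross P \<Longrightarrow> Q \<subseteq> P \<Longrightarrow> noncross Q"
  unfolding noncross_def Ball_def subset_iff by metis

lemma noencl_mono: "noencl P S \<Longrightarrow> Q - T \<subseteq> P - S \<Longrightarrow> T \<subseteq> S \<Longrightarrow> noencl Q T"
  unfolding noencl_def Ball_def subset_iff by (metis DiffD1 DiffD2 DiffI)

lemma noncross_insert_single: "noncross P \<Longrightarrow> noncross (insert {x} P)"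
proof -
  assume a: "noncross P"
  show ?thesis unfolding noncross_def
  proof (intro ballI impI notI)
    fix B1 B2 assume B: "B1 \<in> insert {x} P" "B2 \<in> insert {x} P" "B1 \<noteq> B2"
      and ex: "\<exists>a\<in>B1. \<exists>c\<in>B1. \<exists>b\<in>B2. \<exists>e\<in>B2. a < b \<and> b < c \<and> c < e"
    then obtain a c b e where abce: "a\<in>B1" "c\<in>B1" "b\<in>B2" "e\<in>B2" "a < b" "b < c" "c < e" by blast
    show False
    proof (cases "B1 = {x} \<or> B2 = {x}")
      case True then show ?thesis using abce by auto
    next
      case False
      then have "B1 \<in> P" "B2 \<in> P" using B by auto
      then show ?thesis using noncrossD[OF a _ _ B(3) abce] by blast
    qed
  qed
qed

lemma GG_finite: "finite (GG A r m)"
proof -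
  have "GG A r m \<subseteq> Pow (Pow {1..r}) \<times> Pow (Pow {1..r})"
    by (auto simp: GG_def good_def pon_iff)
  then show ?thesis by (rule finite_subset) auto
qed

lemma good_finite: "good A r P S \<Longrightarrow> finite P \<and> finite S"
proof -
  assume "good A r P S"
  then have "P \<subseteq> Pow {1..r}" "S \<subseteq> P" unfolding good_def pon_iff by auto
  then show ?thesis by (meson finite_Pow_iff finite_atLeastAtMost finite_subset)
qed

lemma GG_0: "GG A 0 m = (if m = 0 then {({},{})} else {})"
proof (cases "m = 0")
  case True
  have "partition_on {} P \<Longrightarrow> P = {}" for P :: "nat set set" by (auto simp: pon_iff)
  moreover have "good A 0 {} {}" by (auto simp: good_def pon_iff noncross_def noencl_def)
  ultimately show ?thesis using True by (auto simp: GG_def good_def)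
next
  case False
  then show ?thesis by (auto simp: GG_def good_def pon_iff)
qed

lemma good_blk: "good A r P S \<Longrightarrow> B \<in> P \<Longrightarrow> B \<subseteq> {1..r} \<and> B \<noteq> {}"
  unfolding good_def pon_iff by blast

lemma good_disj: "good A r P S \<Longrightarrow> B1 \<in> P \<Longrightarrow> B2 \<in> P \<Longrightarrow> x \<in> B1 \<Longrightarrow> x \<in> B2 \<Longrightarrow> B1 = B2"
  unfolding good_def pon_iff by blast

lemma good_cov: "good A r P S \<Longrightarrow> x \<in> {1..r} \<Longrightarrow> \<exists>B\<in>P. x \<in> B"
  unfolding good_def pon_iff by blast

lemma good_S_add:
  assumes g: "good A r P S"
  shows "good A (Suc r) (insert {Suc r} P) (insert {Suc r} S)"
proof -
  have pon: "partition_on {1..Suc r} (insert {Suc r} P)"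
    unfolding pon_iff using good_blk[OF g] good_disj[OF g] good_cov[OF g]
    by (auto; fastforce simp: le_Suc_eq)
  have nc: "noncross (insert {Suc r} P)" using g noncross_insert_single by (auto simp: good_def)
  have ne: "noencl (insert {Suc r} P) (insert {Suc r} S)"
  proof (rule noenclI)
    fix B j a c assume h: "B \<in> insert {Suc r} P" "B \<notin> insert {Suc r} S" "{j} \<in> insert {Suc r} S"
      "a \<in> B" "c \<in> B" "a < j" "j < c"
    have B: "B \<in> P" "B \<notin> S" using h by auto
    show False
    proof (cases "j = Suc r")
      case True
      then show ?thesis using good_blk[OF g B(1)] h by auto
    next
      case False
      then have "{j} \<in> S" using h(3) by auto
      then show ?thesis using noenclD[OF _ B \<open>{j} \<in> S\<close> h(4-7)] g by (auto simp: good_def)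
    qed
  qed
  show ?thesis using g pon nc ne unfolding good_def by auto
qed

lemma good_N_add:
  assumes g: "good A r P S" and sz: "sz A 1"
  shows "good A (Suc r) (insert {Suc r} P) S"
proof -
  have pon: "partition_on {1..Suc r} (insert {Suc r} P)"
    unfolding pon_iff using good_blk[OF g] good_disj[OF g] good_cov[OF g]
    by (auto; fastforce simp: le_Suc_eq)
  have nc: "noncross (insert {Suc r} P)" using g noncross_insert_single by (auto simp: good_def)
  have ne: "noencl (insert {Suc r} P) S"
  proof (rule noenclI)
    fix B j a c assume h: "B \<in> insert {Suc r} P" "B \<notin> S" "{j} \<in> S"
      "a \<in> B" "c \<in> B" "a < j" "j < c"
    show False
    proof (cases "B = {Suc r}")
      case True then show ?thesis using h by auto
    next
      case False
      then have "B \<in> P" using h by auto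
      then show ?thesis using noenclD[OF _ \<open>B \<in> P\<close> h(2-7)] g by (auto simp: good_def)
    qed
  qed
  show ?thesis using g pon nc ne sz unfolding good_def by auto
qed

lemma good_del_single:
  assumes g: "good A (Suc r) P S" and R: "{Suc r} \<in> P"
  shows "good A r (P - {{Suc r}}) (S - {{Suc r}})"
proof -
  have pon: "partition_on {1..r} (P - {{Suc r}})"
    unfolding pon_iff
  proof (intro conjI ballI allI impI)
    fix B assume B: "B \<in> P - {{Suc r}}"
    then show "B \<noteq> {}" using good_blk[OF g] by auto
    show "B \<subseteq> {1..r}"
    proof
      fix x assume "x \<in> B"
      moreover have "x \<noteq> Suc r" using good_disj[OF g _ R, of B x] B \<open>x \<in> B\<close> by auto
      ultimately show "x \<in> {1..r}" using good_blk[OF g, of B] B by auto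
    qed
  next
    fix x assume "x \<in> {1..r}"
    then obtain B where "B \<in> P" "x \<in> B" using good_cov[OF g, of x] by auto
    then show "\<exists>B\<in>P - {{Suc r}}. x \<in> B" using \<open>x \<in> {1..r}\<close> by (intro bexI[of _ B]) auto
  next
    fix B1 B2 x assume "B1 \<in> P - {{Suc r}}" "B2 \<in> P - {{Suc r}}" "x \<in> B1" "x \<in> B2"
    then show "B1 = B2" using good_disj[OF g] by auto
  qed
  have nc: "noncross (P - {{Suc r}})" using g noncross_mono by (auto simp: good_def)
  have ne: "noencl (P - {{Suc r}}) (S - {{Suc r}})"
    using g by (auto simp: good_def intro: noencl_mono)
  show ?thesis using g pon nc ne unfolding good_def by auto
qed

lemma good_C_add:
  assumes g: "good A r P S" and sz2: "sz A 2" and j: "{j} \<in> S" and mx: "\<forall>i. {i} \<in> S \<longrightarrow> i \<le> j"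
  shows "good A (Suc r) (insert {j,Suc r} (P - {{j}})) (S - {{j}})"
proof -
  define R where "R = Suc r"
  have SP: "S \<subseteq> P" using g by (simp add: good_def)
  have jP: "{j} \<in> P" using j SP by auto
  have jr: "j \<in> {1..r}" using good_blk[OF g jP] by auto
  have pon: "partition_on {1..R} (insert {j,R} (P - {{j}}))"
    unfolding pon_iff
  proof (intro conjI ballI allI impI)
    fix B assume B: "B \<in> insert {j,R} (P - {{j}})"
    then show "B \<noteq> {}" using good_blk[OF g] by auto
    show "B \<subseteq> {1..R}" using B good_blk[OF g] jr unfolding R_def by fastforce
  next
    fix x assume x: "x \<in> {1..R}"
    show "\<exists>B\<in>insert {j, R} (P - {{j}}). x \<in> B"
    proof (cases "x = R \<or> x = j")
      case True then show ?thesis by auto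
    next
      case False
      then have "x \<in> {1..r}" using x unfolding R_def by auto
      then obtain B where "B \<in> P" "x \<in> B" using good_cov[OF g] by blast
      then show ?thesis using False by (intro bexI[of _ B]) auto
    qed
  next
    fix B1 B2 x assume h: "B1 \<in> insert {j,R} (P - {{j}})" "B2 \<in> insert {j,R} (P - {{j}})" "x \<in> B1" "x \<in> B2"
    have old: "B \<in> P - {{j}} \<Longrightarrow> x \<in> B \<Longrightarrow> x \<in> {j,R} \<Longrightarrow> False" for B
    proof -
      assume B: "B \<in> P - {{j}}" "x \<in> B" "x \<in> {j,R}"
      show False
      proof (cases "x = j")
        case True then show ?thesis using good_disj[OF g _ jP, of B x] B by auto
      next
        case False then have "x = R" using B by auto
        then show ?thesis using good_blk[OF g, of B] B unfolding R_def by auto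
      qed
    qed
    show "B1 = B2"
      using h old good_disj[OF g, of B1 B2 x] by auto
  qed
  have SP': "S - {{j}} \<subseteq> insert {j,R} (P - {{j}})" using SP by auto
  have jR: "j \<noteq> R" using jr unfolding R_def by auto
  have szs: "\<forall>B\<in>insert {j,R} (P - {{j}}) - (S - {{j}}). sz A (card B)"
  proof
    fix B assume B: "B \<in> insert {j,R} (P - {{j}}) - (S - {{j}})"
    show "sz A (card B)"
    proof (cases "B = {j,R}")
      case True then have "card B = 2" using jR by simp
      then show ?thesis using sz2 by simp
    next
      case False then have "B \<in> P - S" using B by auto
      then show ?thesis using g by (auto simp: good_def)
    qed
  qed
  have nc: "noncross (insert {j,R} (P - {{j}}))"
  proof (rule noncrossI)
    fix B1 B2 a b c e assume h: "B1 \<in> insert {j,R} (P - {{j}})" "B2 \<in> insert {j,R} (P - {{j}})" "B1 \<noteq> B2"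
      "a \<in> B1" "c \<in> B1" "b \<in> B2" "e \<in> B2" "a < b" "b < c" "c < e"
    show False
    proof (cases "B1 = {j,R}")
      case True
      then have "B2 \<in> P" using h by auto
      then have "e \<le> r" using good_blk[OF g \<open>B2 \<in> P\<close>] h(7) by auto
      then show ?thesis using True h(4,5,8-10) unfolding R_def by auto
    next
      case F1: False
      then have B1: "B1 \<in> P" "B1 \<noteq> {j}" using h by auto
      show ?thesis
      proof (cases "B2 = {j,R}")
        case True
        then have bj: "b = j" using h(4-10) good_blk[OF g B1(1)] unfolding R_def by auto
        have "B1 \<notin> S"
        proof
          assume "B1 \<in> S" then have "card B1 = 1" using g by (auto simp: good_def)
          then obtain y where "B1 = {y}" by (metis card_1_singletonE)
          then show False using h(4,5,8,9) by auto
        qed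
        then show ?thesis using noenclD[OF _ B1(1) \<open>B1 \<notin> S\<close> j h(4,5)] h(8,9) bj g by (auto simp: good_def)
      next
        case False
        then have "B2 \<in> P" using h by auto
        then show ?thesis using noncrossD[OF _ B1(1) _ h(3-10)] g by (auto simp: good_def)
      qed
    qed
  qed
  have ne: "noencl (insert {j,R} (P - {{j}})) (S - {{j}})"
  proof (rule noenclI)
    fix B i a c assume h: "B \<in> insert {j,R} (P - {{j}})" "B \<notin> S - {{j}}" "{i} \<in> S - {{j}}"
      "a \<in> B" "c \<in> B" "a < i" "i < c"
    have ij: "i < j" using mx h(3) by (metis DiffE insertI1 le_neq_implies_less)
    have "i \<le> r" using good_blk[OF g, of "{i}"] h(3) SP by auto
    show False
    proof (cases "B = {j,R}")
      case True then show ?thesis using h(4-7) ij \<open>i \<le> r\<close> unfolding R_def by auto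
    next
      case False
      then have "B \<in> P" "B \<notin> S" using h by auto
      then show ?thesis using noenclD[OF _ _ _ _ h(4-7), of P S] h(3) g by (auto simp: good_def)
    qed
  qed
  show ?thesis using g pon SP' szs nc ne unfolding good_def R_def by auto
qed

lemma good_C_del:
  assumes g: "good A (Suc r) P S" and B: "{j, Suc r} \<in> P" and jl: "j < Suc r"
  shows "good A r (insert {j} (P - {{j,Suc r}})) (insert {j} S) \<and> (\<forall>i. {i} \<in> S \<longrightarrow> i < j)"
proof -
  define R where "R = Suc r"
  have SP: "S \<subseteq> P" using g by (simp add: good_def)
  have jr: "j \<in> {1..r}" using good_blk[OF g B] jl by auto
  have BS: "{j,R} \<notin> S"
  proof
    assume "{j,R} \<in> S" then have "card {j,R} = 1" using g by (auto simp: good_def R_def)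
    then show False using jl unfolding R_def by simp
  qed
  have mx: "\<forall>i. {i} \<in> S \<longrightarrow> i < j"
  proof (intro allI impI)
    fix i assume i: "{i} \<in> S"
    then have iP: "{i} \<in> P" using SP by auto
    have "i \<noteq> R" using good_disj[OF g iP B, of R] jl unfolding R_def by auto
    moreover have "i \<noteq> j" using good_disj[OF g iP B, of j] jl unfolding R_def by auto
    moreover have "i \<in> {1..R}" using good_blk[OF g iP] unfolding R_def by auto
    ultimately have "i < R" by auto
    show "i < j"
    proof (rule ccontr)
      assume "\<not> i < j"
      then have "j < i" using \<open>i \<noteq> j\<close> by auto
      then show False using noenclD[OF _ B[folded R_def] BS i, of j R] g \<open>i < R\<close> by (auto simp: good_def)
    qed
  qed
  have oldR: "B' \<in> P \<Longrightarrow> B' \<noteq> {j,R} \<Longrightarrow> B' \<subseteq> {1..r} \<and> j \<notin> B'" for B'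
  proof -
    assume h: "B' \<in> P" "B' \<noteq> {j,R}"
    have "R \<notin> B'" using good_disj[OF g h(1) B, of R] h(2) R_def by auto
    moreover have "j \<notin> B'" using good_disj[OF g h(1) B, of j] h(2) R_def by auto
    ultimately show ?thesis using good_blk[OF g h(1)] unfolding R_def by (force simp: subset_iff le_Suc_eq)
  qed
  have pon: "partition_on {1..r} (insert {j} (P - {{j,R}}))"
    unfolding pon_iff
  proof (intro conjI ballI allI impI)
    fix B' assume "B' \<in> insert {j} (P - {{j,R}})"
    then show "B' \<noteq> {}" "B' \<subseteq> {1..r}" using good_blk[OF g] oldR jr by auto
  next
    fix x assume x: "x \<in> {1..r}"
    show "\<exists>B\<in>insert {j} (P - {{j, R}}). x \<in> B"
    proof (cases "x = j")
      case True then show ?thesis by auto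
    next
      case False
      obtain B' where "B' \<in> P" "x \<in> B'" using good_cov[OF g, of x] x by auto
      moreover have "B' \<noteq> {j,R}" using False x \<open>x \<in> B'\<close> unfolding R_def by auto
      ultimately show ?thesis by (intro bexI[of _ B']) auto
    qed
  next
    fix B1 B2 x assume h: "B1 \<in> insert {j} (P - {{j,R}})" "B2 \<in> insert {j} (P - {{j,R}})" "x \<in> B1" "x \<in> B2"
    then show "B1 = B2" using oldR good_disj[OF g, of B1 B2 x] by auto
  qed
  have SP': "insert {j} S \<subseteq> insert {j} (P - {{j,R}})" using SP BS by auto
  have szs: "\<forall>B\<in>insert {j} (P - {{j,R}}) - insert {j} S. sz A (card B)"
    using g by (auto simp: good_def)
  have nc: "noncross (insert {j} (P - {{j,R}}))"
    using g noncross_insert_single noncross_mono[of P "P - {{j,R}}"] by (auto simp: good_def)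
  have ne: "noencl (insert {j} (P - {{j,R}})) (insert {j} S)"
  proof (rule noenclI)
    fix B' i a c assume h: "B' \<in> insert {j} (P - {{j,R}})" "B' \<notin> insert {j} S" "{i} \<in> insert {j} S"
      "a \<in> B'" "c \<in> B'" "a < i" "i < c"
    have B': "B' \<in> P" "B' \<noteq> {j,R}" "B' \<notin> S" using h by auto
    show False
    proof (cases "i = j")
      case True
      have "c < R" using oldR[OF B'(1,2)] h(5) unfolding R_def by auto
      then show ?thesis using noncrossD[OF _ B'(1) B B'(2)[unfolded R_def] h(4,5), of j "Suc r"] True h(6,7) g
        by (auto simp: good_def R_def)
    next
      case False
      then have "{i} \<in> S" using h(3) by auto
      then show ?thesis using noenclD[OF _ B'(1) B'(3) _ h(4-7)] g by (auto simp: good_def)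
    qed
  qed
  show ?thesis using g pon SP' szs nc ne mx unfolding good_def R_def by auto
qed

lemma good_card_S: "good A r P S \<Longrightarrow> B \<in> S \<Longrightarrow> \<exists>x. B = {x}"
  unfolding good_def by (metis card_1_singletonE subsetD)

lemma insert_inj_notin: "insert a X = insert a Y \<Longrightarrow> a \<notin> X \<Longrightarrow> a \<notin> Y \<Longrightarrow> X = Y"
  by (metis Diff_insert_absorb)

lemma card_GS:
  "card {x \<in> GG A (Suc r) m. {Suc r} \<in> snd x} = (if m \<ge> 1 then card (GG A r (m-1)) else 0)"
proof (cases "m \<ge> 1")
  case False
  have "{x \<in> GG A (Suc r) m. {Suc r} \<in> snd x} = {}"
  proof (safe)
    fix P S assume "(P,S) \<in> GG A (Suc r) m" "{Suc r} \<in> snd (P,S)"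
    then have "finite S" "card S = 0" "S \<noteq> {}" using False good_finite by (auto simp: GG_def)
    then show "(P,S) \<in> {}" by simp
  qed
  then show ?thesis using False by (metis card.empty)
next
  case True
  define h where "h = (\<lambda>(P::nat set set,S::nat set set). (insert {Suc r} P, insert {Suc r} S))"
  have notin: "good A r P S \<Longrightarrow> {Suc r} \<notin> P" for P S using good_blk[of A r P S "{Suc r}"] by auto
  have eq: "{x \<in> GG A (Suc r) m. {Suc r} \<in> snd x} = h ` GG A r (m-1)"
  proof (rule set_eqI, rule iffI)
    fix x assume "x \<in> {x \<in> GG A (Suc r) m. {Suc r} \<in> snd x}"
    then obtain P S where h1: "x = (P,S)" "(P,S) \<in> GG A (Suc r) m" "{Suc r} \<in> S" by (cases x) auto
    then have g: "good A (Suc r) P S" and c: "card S = m" and RS: "{Suc r} \<in> S" by (auto simp: GG_def)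
    have RP: "{Suc r} \<in> P" using g RS by (auto simp: good_def)
    have "good A r (P - {{Suc r}}) (S - {{Suc r}})" by (rule good_del_single[OF g RP])
    moreover have "card (S - {{Suc r}}) = m - 1" using c RS good_finite[OF g] by simp
    ultimately have "(P - {{Suc r}}, S - {{Suc r}}) \<in> GG A r (m-1)" by (simp add: GG_def)
    moreover have "h (P - {{Suc r}}, S - {{Suc r}}) = (P,S)" using RP RS unfolding h_def by auto
    ultimately show "x \<in> h ` GG A r (m-1)" using h1 by (metis image_eqI)
  next
    fix x assume "x \<in> h ` GG A r (m-1)"
    then obtain P S where PS: "(P,S) \<in> GG A r (m-1)" "x = h (P,S)" by auto
    then have g: "good A r P S" and c: "card S = m - 1" by (auto simp: GG_def)
    have "{Suc r} \<notin> S" using notin[OF g] g by (auto simp: good_def)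
    then have "card (insert {Suc r} S) = m" using c True good_finite[OF g] by simp
    then have "h (P,S) \<in> GG A (Suc r) m" using good_S_add[OF g] unfolding h_def by (simp add: GG_def)
    moreover have "{Suc r} \<in> snd (h (P,S))" unfolding h_def by simp
    ultimately show "x \<in> {x \<in> GG A (Suc r) m. {Suc r} \<in> snd x}" using PS by simp
  qed
  have inj: "inj_on h (GG A r (m-1))"
  proof (rule inj_onI, clarify)
    fix P1 S1 P2 S2 assume a: "(P1,S1) \<in> GG A r (m-1)" "(P2,S2) \<in> GG A r (m-1)" "h (P1,S1) = h (P2,S2)"
    then have g: "good A r P1 S1" "good A r P2 S2" by (auto simp: GG_def)
    have "{Suc r} \<notin> S1" "{Suc r} \<notin> S2" using notin g by (auto simp: good_def)
    moreover have "insert {Suc r} P1 = insert {Suc r} P2" "insert {Suc r} S1 = insert {Suc r} S2"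
      using a(3) unfolding h_def by auto
    ultimately show "P1 = P2 \<and> S1 = S2" using notin[OF g(1)] notin[OF g(2)] insert_inj_notin by metis
  qed
  show ?thesis using True eq card_image[OF inj] by simp
qed

lemma card_GN:
  "card {x \<in> GG A (Suc r) m. {Suc r} \<in> fst x \<and> {Suc r} \<notin> snd x} = (if A = TL then 0 else card (GG A r m))"
proof (cases "A = TL")
  case True
  have "{x \<in> GG A (Suc r) m. {Suc r} \<in> fst x \<and> {Suc r} \<notin> snd x} = {}"
  proof (safe)
    fix P S assume "(P,S) \<in> GG A (Suc r) m" "{Suc r} \<in> fst (P,S)" "{Suc r} \<notin> snd (P,S)"
    then have "{Suc r} \<in> P - S" "good A (Suc r) P S" by (auto simp: GG_def)
    then have "sz A (card {Suc r})" unfolding good_def by blast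
    then show "(P,S) \<in> {}" using True by (simp add: sz_def)
  qed
  then show ?thesis using True by (metis card.empty)
next
  case False
  then have sz1: "sz A 1" by (cases A) (auto simp: sz_def)
  define h where "h = (\<lambda>(P::nat set set,S::nat set set). (insert {Suc r} P, S))"
  have notin: "good A r P S \<Longrightarrow> {Suc r} \<notin> P" for P S using good_blk[of A r P S "{Suc r}"] by auto
  have eq: "{x \<in> GG A (Suc r) m. {Suc r} \<in> fst x \<and> {Suc r} \<notin> snd x} = h ` GG A r m"
  proof (rule set_eqI, rule iffI)
    fix x assume "x \<in> {x \<in> GG A (Suc r) m. {Suc r} \<in> fst x \<and> {Suc r} \<notin> snd x}"
    then obtain P S where h1: "x = (P,S)" "(P,S) \<in> GG A (Suc r) m" "{Suc r} \<in> P" "{Suc r} \<notin> S" by (cases x) auto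
    then have g: "good A (Suc r) P S" and c: "card S = m" and RP: "{Suc r} \<in> P" and RS: "{Suc r} \<notin> S"
      by (auto simp: GG_def)
    have "good A r (P - {{Suc r}}) (S - {{Suc r}})" by (rule good_del_single[OF g RP])
    then have "(P - {{Suc r}}, S) \<in> GG A r m" using RS c by (simp add: GG_def)
    moreover have "h (P - {{Suc r}}, S) = (P,S)" using RP unfolding h_def by auto
    ultimately show "x \<in> h ` GG A r m" using h1 by (metis image_eqI)
  next
    fix x assume "x \<in> h ` GG A r m"
    then obtain P S where PS: "(P,S) \<in> GG A r m" "x = h (P,S)" by auto
    then have g: "good A r P S" and c: "card S = m" by (auto simp: GG_def)
    have "h (P,S) \<in> GG A (Suc r) m" using good_N_add[OF g sz1] c unfolding h_def by (simp add: GG_def)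
    moreover have "{Suc r} \<in> fst (h (P,S))" unfolding h_def by simp
    moreover have "{Suc r} \<notin> snd (h (P,S))" using notin[OF g] g unfolding h_def by (auto simp: good_def)
    ultimately show "x \<in> {x \<in> GG A (Suc r) m. {Suc r} \<in> fst x \<and> {Suc r} \<notin> snd x}" using PS by simp
  qed
  have inj: "inj_on h (GG A r m)"
  proof (rule inj_onI, clarify)
    fix P1 S1 P2 S2 assume a: "(P1,S1) \<in> GG A r m" "(P2,S2) \<in> GG A r m" "h (P1,S1) = h (P2,S2)"
    then have g: "good A r P1 S1" "good A r P2 S2" by (auto simp: GG_def)
    moreover have "insert {Suc r} P1 = insert {Suc r} P2" "S1 = S2"
      using a(3) unfolding h_def by auto
    ultimately show "P1 = P2 \<and> S1 = S2" using notin[OF g(1)] notin[OF g(2)] insert_inj_notin by metis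
  qed
  show ?thesis using False eq card_image[OF inj] by simp
qed

lemma good_fin_US: "good A r P S \<Longrightarrow> finite (\<Union>S)"
proof -
  assume g: "good A r P S"
  have "\<Union>S \<subseteq> {1..r}" using good_blk[OF g] g by (auto simp: good_def)
  then show ?thesis by (rule finite_subset) simp
qed

lemma max_single:
  assumes g: "good A r P S" and ne: "S \<noteq> {}"
  shows "{Max (\<Union>S)} \<in> S \<and> (\<forall>i. {i} \<in> S \<longrightarrow> i \<le> Max (\<Union>S))"
proof -
  have fin: "finite (\<Union>S)" using good_fin_US[OF g] .
  obtain B0 where "B0 \<in> S" using ne by auto
  then obtain y where "B0 = {y}" using good_card_S[OF g] by blast
  then have "\<Union>S \<noteq> {}" using \<open>B0 \<in> S\<close> by auto
  then have "Max (\<Union>S) \<in> \<Union>S" using fin Max_in by blast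
  then obtain B where "B \<in> S" "Max (\<Union>S) \<in> B" by auto
  moreover obtain y where "B = {y}" using good_card_S[OF g \<open>B \<in> S\<close>] by auto
  ultimately have "{Max (\<Union>S)} \<in> S" by auto
  moreover have "{i} \<in> S \<Longrightarrow> i \<le> Max (\<Union>S)" for i using fin by (auto intro: Max_ge)
  ultimately show ?thesis by auto
qed

lemma card_GC:
  "card {x \<in> GG A (Suc r) m. \<exists>j<Suc r. {j, Suc r} \<in> fst x} = (if A = PlanarRook then 0 else card (GG A r (Suc m)))"
proof (cases "A = PlanarRook")
  case True
  have "{x \<in> GG A (Suc r) m. \<exists>j<Suc r. {j, Suc r} \<in> fst x} = {}"
  proof (safe)
    fix P S j assume a: "(P,S) \<in> GG A (Suc r) m" "j < Suc r" "{j, Suc r} \<in> fst (P,S)"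
    then have g: "good A (Suc r) P S" by (auto simp: GG_def)
    have c2: "card {j, Suc r} = 2" using a(2) by simp
    have "{j, Suc r} \<notin> S" using g c2 by (auto simp: good_def)
    then have "{j, Suc r} \<in> P - S" using a by auto
    then have "sz A (card {j, Suc r})" using g unfolding good_def by blast
    then show "(P,S) \<in> {}" using True c2 by (simp add: sz_def)
  qed
  then show ?thesis using True by (metis card.empty)
next
  case False
  then have sz2: "sz A 2" by (cases A) (auto simp: sz_def)
  define R where "R = Suc r"
  define h where "h = (\<lambda>(P::nat set set,S::nat set set). let j = Max (\<Union>S) in (insert {j,R} (P - {{j}}), S - {{j}}))"
  have hgood: "(P,S) \<in> GG A r (Suc m) \<Longrightarrow> h (P,S) \<in> GG A (Suc r) m \<and> Max (\<Union>S) < R \<and> {Max (\<Union>S), R} \<in> fst (h (P,S))"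
    for P S
  proof -
    assume "(P,S) \<in> GG A r (Suc m)"
    then have g: "good A r P S" and c: "card S = Suc m" by (auto simp: GG_def)
    then have ne: "S \<noteq> {}" by auto
    note ms = max_single[OF g ne]
    define j where "j = Max (\<Union>S)"
    have jS: "{j} \<in> S" and mx: "\<forall>i. {i} \<in> S \<longrightarrow> i \<le> j" using ms unfolding j_def by auto
    have "j \<le> r" using good_blk[OF g, of "{j}"] jS g by (auto simp: good_def)
    have hh: "h (P,S) = (insert {j,R} (P - {{j}}), S - {{j}})" unfolding h_def j_def by (simp add: Let_def)
    have "good A (Suc r) (insert {j,R} (P - {{j}})) (S - {{j}})" using good_C_add[OF g sz2 jS mx] unfolding R_def .
    moreover have "card (S - {{j}}) = m" using c jS good_finite[OF g] by simp
    ultimately show ?thesis using hh \<open>j \<le> r\<close> unfolding j_def R_def by (simp add: GG_def)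
  qed
  have eq: "{x \<in> GG A (Suc r) m. \<exists>j<Suc r. {j, Suc r} \<in> fst x} = h ` GG A r (Suc m)"
  proof (rule set_eqI, rule iffI)
    fix x assume "x \<in> {x \<in> GG A (Suc r) m. \<exists>j<Suc r. {j, Suc r} \<in> fst x}"
    then obtain P S j where h1: "x = (P,S)" "(P,S) \<in> GG A (Suc r) m" "j < Suc r" "{j, Suc r} \<in> P"
      by (cases x) auto
    then have g: "good A (Suc r) P S" and c: "card S = m" by (auto simp: GG_def)
    note cd = good_C_del[OF g h1(4) h1(3)]
    have jP: "{j} \<notin> P" using good_disj[OF g _ h1(4), of "{j}" j] h1(3) by auto
    then have jS: "{j} \<notin> S" using g by (auto simp: good_def)
    have "(insert {j} (P - {{j,R}}), insert {j} S) \<in> GG A r (Suc m)"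
      using cd jS c good_finite[OF g] unfolding R_def by (simp add: GG_def)
    moreover have "Max (\<Union>(insert {j} S)) = j"
    proof (rule Max_eqI)
      show "finite (\<Union>(insert {j} S))" using good_fin_US[OF g] by simp
      show "j \<in> \<Union>(insert {j} S)" by simp
      fix y assume "y \<in> \<Union>(insert {j} S)"
      then obtain B where "B \<in> insert {j} S" "y \<in> B" by auto
      then show "y \<le> j"
      proof (cases "B = {j}")
        case False
        then have "B \<in> S" using \<open>B \<in> insert {j} S\<close> by auto
        then obtain z where "B = {z}" using good_card_S[OF g] by blast
        then show ?thesis using cd \<open>B \<in> S\<close> \<open>y \<in> B\<close> by fastforce
      qed simp
    qed
    moreover have "insert {j,R} (insert {j} (P - {{j,R}}) - {{j}}) = P"
      using jP h1(4) unfolding R_def by auto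
    moreover have "insert {j} S - {{j}} = S" using jS by auto
    ultimately have "h (insert {j} (P - {{j,R}}), insert {j} S) = (P,S)"
      "(insert {j} (P - {{j,R}}), insert {j} S) \<in> GG A r (Suc m)" unfolding h_def by (simp_all add: Let_def)
    then show "x \<in> h ` GG A r (Suc m)" using h1(1) by (metis image_eqI)
  next
    fix x assume "x \<in> h ` GG A r (Suc m)"
    then obtain P S where PS: "(P,S) \<in> GG A r (Suc m)" "x = h (P,S)" by auto
    then show "x \<in> {x \<in> GG A (Suc r) m. \<exists>j<Suc r. {j, Suc r} \<in> fst x}"
      using hgood[OF PS(1)] unfolding R_def by auto
  qed
  have inj: "inj_on h (GG A r (Suc m))"
  proof (rule inj_onI, clarify)
    fix P1 S1 P2 S2 assume a: "(P1,S1) \<in> GG A r (Suc m)" "(P2,S2) \<in> GG A r (Suc m)" "h (P1,S1) = h (P2,S2)"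
    then have g: "good A r P1 S1" "good A r P2 S2" by (auto simp: GG_def)
    define j1 where "j1 = Max (\<Union>S1)"
    define j2 where "j2 = Max (\<Union>S2)"
    have h1: "h (P1,S1) = (insert {j1,R} (P1 - {{j1}}), S1 - {{j1}})" unfolding h_def j1_def by (simp add: Let_def)
    have h2: "h (P2,S2) = (insert {j2,R} (P2 - {{j2}}), S2 - {{j2}})" unfolding h_def j2_def by (simp add: Let_def)
    note hg1 = hgood[OF a(1), folded j1_def] and hg2 = hgood[OF a(2), folded j2_def]
    have gg: "good A (Suc r) (fst (h (P1,S1))) (snd (h (P1,S1)))" using hg1 by (cases "h (P1,S1)") (auto simp: GG_def)
    have "{j1,R} = {j2,R}" using good_disj[OF gg, of "{j1,R}" "{j2,R}" R] hg1 hg2 a(3) unfolding R_def by auto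
    then have jj: "j1 = j2" using hg1 hg2 by (metis doubleton_eq_iff less_not_refl)
    have ne1: "S1 \<noteq> {}" "S2 \<noteq> {}" using a by (auto simp: GG_def)
    have js: "{j1} \<in> S1" "{j2} \<in> S2" using max_single[OF g(1) ne1(1)] max_single[OF g(2) ne1(2)]
      unfolding j1_def j2_def by auto
    have jp: "{j1} \<in> P1" "{j2} \<in> P2" using js g by (auto simp: good_def)
    have nR: "{j1,R} \<notin> P1" "{j2,R} \<notin> P2" using good_blk[OF g(1), of "{j1,R}"] good_blk[OF g(2), of "{j2,R}"]
      unfolding R_def by auto
    have "insert {j1,R} (P1 - {{j1}}) = insert {j1,R} (P2 - {{j1}})" "S1 - {{j1}} = S2 - {{j1}}"
      using a(3) h1 h2 jj by auto
    then have "P1 - {{j1}} = P2 - {{j1}}" using nR jj insert_inj_notin by (metis Diff_iff)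
    then have "P1 = P2" using jp jj by (metis insert_Diff)
    moreover have "S1 = S2" using \<open>S1 - {{j1}} = S2 - {{j1}}\<close> js jj by (metis insert_Diff)
    ultimately show "P1 = P2 \<and> S1 = S2" by simp
  qed
  show ?thesis using False eq card_image[OF inj] by simp
qed

lemma GG_split:
  "GG A (Suc r) m = {x \<in> GG A (Suc r) m. {Suc r} \<in> snd x}
     \<union> {x \<in> GG A (Suc r) m. {Suc r} \<in> fst x \<and> {Suc r} \<notin> snd x}
     \<union> {x \<in> GG A (Suc r) m. \<exists>j<Suc r. {j, Suc r} \<in> fst x}"
proof (rule set_eqI, rule iffI)
  fix x assume x: "x \<in> GG A (Suc r) m"
  obtain P S where PS: "x = (P,S)" by (cases x)
  then have g: "good A (Suc r) P S" using x by (auto simp: GG_def)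
  obtain B where B: "B \<in> P" "Suc r \<in> B" using good_cov[OF g, of "Suc r"] by auto
  have "{Suc r} \<in> S \<or> ({Suc r} \<in> P \<and> {Suc r} \<notin> S) \<or> (\<exists>j<Suc r. {j, Suc r} \<in> P)"
  proof (cases "B \<in> S")
    case True
    then obtain y where "B = {y}" using good_card_S[OF g] by blast
    then show ?thesis using True B by auto
  next
    case False
    then have "sz A (card B)" using g B unfolding good_def by blast
    then have "card B = 1 \<or> card B = 2" by (cases A) (auto simp: sz_def)
    then show ?thesis
    proof
      assume "card B = 1"
      then obtain y where "B = {y}" by (metis card_1_singletonE)
      then show ?thesis using B False by auto
    next
      assume "card B = 2"
      then obtain a b where ab: "a \<noteq> b" "B = {a,b}" by (metis card2_iff)
      have "\<exists>j. j \<noteq> Suc r \<and> B = {j, Suc r}"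
      proof (cases "a = Suc r")
        case True then show ?thesis using ab by (intro exI[of _ b]) auto
      next
        case False then have "b = Suc r" using ab B(2) by auto
        then show ?thesis using ab by (intro exI[of _ a]) auto
      qed
      then obtain j where j: "j \<noteq> Suc r" "B = {j, Suc r}" by blast
      then have "j \<le> Suc r" using good_blk[OF g B(1)] by auto
      then show ?thesis using j B by (intro disjI2) (auto intro!: exI[of _ j])
    qed
  qed
  then show "x \<in> {x \<in> GG A (Suc r) m. {Suc r} \<in> snd x}
     \<union> {x \<in> GG A (Suc r) m. {Suc r} \<in> fst x \<and> {Suc r} \<notin> snd x}
     \<union> {x \<in> GG A (Suc r) m. \<exists>j<Suc r. {j, Suc r} \<in> fst x}" using x PS by auto
qed auto

lemma card_GG: "card (GG A r m) = cnt A r m"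
proof (induction r arbitrary: m)
  case 0
  then show ?case by (simp add: GG_0)
next
  case (Suc r)
  let ?S = "{x \<in> GG A (Suc r) m. {Suc r} \<in> snd x}"
  let ?N = "{x \<in> GG A (Suc r) m. {Suc r} \<in> fst x \<and> {Suc r} \<notin> snd x}"
  let ?C = "{x \<in> GG A (Suc r) m. \<exists>j<Suc r. {j, Suc r} \<in> fst x}"
  have fin: "finite ?S" "finite ?N" "finite ?C" using GG_finite by auto
  have d1: "?S \<inter> ?N = {}" by auto
  have d2: "(?S \<union> ?N) \<inter> ?C = {}"
  proof (rule ccontr)
    assume "(?S \<union> ?N) \<inter> ?C \<noteq> {}"
    then obtain x where x: "x \<in> ?S \<union> ?N" "x \<in> ?C" by blast
    obtain P S where PS: "x = (P,S)" by (cases x)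
    have g: "good A (Suc r) P S" using x PS by (auto simp: GG_def)
    obtain j where a: "j < Suc r" "{j, Suc r} \<in> P" using x PS by auto
    have "{Suc r} \<in> P" using x PS g by (auto simp: good_def)
    note a = this a
    show False using good_disj[OF g a(1) a(3), of "Suc r"] a(2) by auto
  qed
  have "card (GG A (Suc r) m) = card ?S + card ?N + card ?C"
    by (subst GG_split) (simp add: card_Un_disjoint fin d1 d2)
  also have "\<dots> = cnt A (Suc r) m"
    unfolding card_GS card_GN card_GC Suc.IH cnt.simps(2) by simp
  finally show ?case .
qed

definition tp :: "nat set \<Rightarrow> vtx set" where "tp B = Pair True ` B"
definition bt :: "nat set \<Rightarrow> vtx set" where "bt B = Pair False ` B"
definition mk :: "nat set set \<Rightarrow> nat set set \<Rightarrow> diagram" where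
  "mk P S = (\<lambda>B. tp B \<union> bt B) ` S \<union> tp ` (P - S) \<union> bt ` (P - S)"

lemma sym_diag_iff: "sym_diag k m d \<longleftrightarrow> (\<exists>P S. partition_on {1..k} P \<and> S \<subseteq> P \<and> card S = m \<and> d = mk P S)"
  unfolding sym_diag_def mk_def tp_def bt_def by (simp add: setcompr_eq_image set_diff_eq)

lemma tp_iff[simp]: "(b,i) \<in> tp B \<longleftrightarrow> b \<and> i \<in> B" by (auto simp: tp_def)
lemma bt_iff[simp]: "(b,i) \<in> bt B \<longleftrightarrow> \<not> b \<and> i \<in> B" by (auto simp: bt_def)

lemma tp_eq[simp]: "tp B1 = tp B2 \<longleftrightarrow> B1 = B2" by (auto simp: tp_def)
lemma bt_eq[simp]: "bt B1 = bt B2 \<longleftrightarrow> B1 = B2" by (auto simp: bt_def)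
lemma tp_bt_eq[simp]: "tp B1 = bt B2 \<longleftrightarrow> B1 = {} \<and> B2 = {}" by (auto simp: tp_def bt_def)
lemma tpbt_eq[simp]: "tp B1 \<union> bt B1 = tp B2 \<union> bt B2 \<longleftrightarrow> B1 = B2"
  by (auto simp: tp_def bt_def)
lemma tpbt_tp_eq[simp]: "tp B1 \<union> bt B1 = tp B2 \<longleftrightarrow> B1 = {} \<and> B2 = {}"
  by (auto simp: tp_def bt_def)
lemma tpbt_bt_eq[simp]: "tp B1 \<union> bt B1 = bt B2 \<longleftrightarrow> B1 = {} \<and> B2 = {}"
  by (auto simp: tp_def bt_def)

lemma card_tp[simp]: "card (tp B) = card B" unfolding tp_def by (rule card_image) (simp add: inj_on_def)
lemma card_bt[simp]: "card (bt B) = card B" unfolding bt_def by (rule card_image) (simp add: inj_on_def)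
lemma card_tpbt: "finite B \<Longrightarrow> card (tp B \<union> bt B) = 2 * card B"
  by (subst card_Un_disjoint) (auto simp: tp_def bt_def card_image inj_on_def)

lemma mk_mem: "X \<in> mk P S \<longleftrightarrow> (\<exists>B\<in>S. X = tp B \<union> bt B) \<or> (\<exists>B\<in>P-S. X = tp B) \<or> (\<exists>B\<in>P-S. X = bt B)"
  unfolding mk_def by blast

lemma mk_pon:
  assumes p: "partition_on {1..k} P" and S: "S \<subseteq> P"
  shows "partition_on (verts k) (mk P S)"
  unfolding pon_iff
proof (intro conjI ballI allI impI)
  fix X assume "X \<in> mk P S"
  then obtain B where B: "B \<in> P" "X = tp B \<union> bt B \<or> X = tp B \<or> X = bt B" using S by (auto simp: mk_mem)
  have "B \<noteq> {}" "B \<subseteq> {1..k}" using p B(1) by (auto simp: pon_iff)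
  then show "X \<noteq> {}" "X \<subseteq> verts k" using B(2) by (auto simp: verts_def tp_def bt_def)
next
  fix v assume "v \<in> verts k"
  then obtain b i where v: "v = (b,i)" "i \<in> {1..k}" by (auto simp: verts_def)
  then obtain B where B: "B \<in> P" "i \<in> B" using p unfolding pon_iff by blast
  show "\<exists>X\<in>mk P S. v \<in> X"
  proof (cases "B \<in> S")
    case True then show ?thesis using B v by (intro bexI[of _ "tp B \<union> bt B"]) (auto simp: mk_mem)
  next
    case False
    show ?thesis
    proof (cases b)
      case True then show ?thesis using B v False by (intro bexI[of _ "tp B"]) (auto simp: mk_mem)
    next
      case F: False then show ?thesis using B v False by (intro bexI[of _ "bt B"]) (auto simp: mk_mem)
    qed
  qed
next
  fix X1 X2 v assume h: "X1 \<in> mk P S" "X2 \<in> mk P S" "v \<in> X1" "v \<in> X2"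
  obtain b i where v: "v = (b,i)" by (cases v)
  have disj: "B1 \<in> P \<Longrightarrow> B2 \<in> P \<Longrightarrow> i \<in> B1 \<Longrightarrow> i \<in> B2 \<Longrightarrow> B1 = B2" for B1 B2
    using p by (auto simp: pon_iff)
  from h(1,3) obtain B1 where B1: "B1 \<in> P" "i \<in> B1" "X1 = (if B1 \<in> S then tp B1 \<union> bt B1 else if b then tp B1 else bt B1)"
    using S v by (auto simp: mk_mem)
  from h(2,4) obtain B2 where B2: "B2 \<in> P" "i \<in> B2" "X2 = (if B2 \<in> S then tp B2 \<union> bt B2 else if b then tp B2 else bt B2)"
    using S v by (auto simp: mk_mem)
  show "X1 = X2" using disj[OF B1(1) B2(1) B1(2) B2(2)] B1(3) B2(3) by simp
qed

definition blkok :: "alg \<Rightarrow> vtx set \<Rightarrow> bool" where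
  "blkok A X = (case A of TL \<Rightarrow> card X = 2 | Motzkin \<Rightarrow> card X = 1 \<or> card X = 2
      | PlanarRook \<Rightarrow> card {i. (True,i) \<in> X} \<le> 1 \<and> card {i. (False,i) \<in> X} \<le> 1)"

lemma in_alg_blkok: "in_alg A k d \<longleftrightarrow> d \<in> Pk k \<and> planar k d \<and> (\<forall>X\<in>d. blkok A X)"
  unfolding in_alg_def blkok_def by (cases A) auto

lemma topset_tpbt[simp]: "{i. (True,i) \<in> tp B \<union> bt B} = B" "{i. (False,i) \<in> tp B \<union> bt B} = B"
  "{i. (True,i) \<in> tp B} = B" "{i. (False,i) \<in> tp B} = {}"
  "{i. (True,i) \<in> bt B} = {}" "{i. (False,i) \<in> bt B} = B"
  by auto

lemma blkok_tpbt: "finite B \<Longrightarrow> B \<noteq> {} \<Longrightarrow> blkok A (tp B \<union> bt B) \<longleftrightarrow> card B = 1"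
proof -
  assume "finite B" "B \<noteq> {}"
  then have "card B \<ge> 1" by (simp add: Suc_leI card_gt_0_iff)
  then show ?thesis using card_tpbt[OF \<open>finite B\<close>] by (cases A) (auto simp: blkok_def)
qed

lemma blkok_tp: "finite B \<Longrightarrow> B \<noteq> {} \<Longrightarrow> blkok A (tp B) \<longleftrightarrow> sz A (card B)"
proof -
  assume "finite B" "B \<noteq> {}"
  then have "card B \<ge> 1" by (simp add: Suc_leI card_gt_0_iff)
  then show ?thesis by (cases A) (auto simp: blkok_def sz_def)
qed

lemma blkok_bt: "finite B \<Longrightarrow> B \<noteq> {} \<Longrightarrow> blkok A (bt B) \<longleftrightarrow> sz A (card B)"
proof -
  assume "finite B" "B \<noteq> {}"
  then have "card B \<ge> 1" by (simp add: Suc_leI card_gt_0_iff)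
  then show ?thesis by (cases A) (auto simp: blkok_def sz_def)
qed

lemma mk_blkok:
  assumes p: "partition_on {1..k} P" and S: "S \<subseteq> P"
  shows "(\<forall>X\<in>mk P S. blkok A X) \<longleftrightarrow> (\<forall>B\<in>S. card B = 1) \<and> (\<forall>B\<in>P-S. sz A (card B))"
proof -
  have fb: "B \<in> P \<Longrightarrow> finite B \<and> B \<noteq> {}" for B
  proof -
    assume "B \<in> P"
    then have "B \<subseteq> {1..k}" "B \<noteq> {}" using p unfolding pon_iff by auto
    then show ?thesis by (meson finite_atLeastAtMost finite_subset)
  qed
  show ?thesis
  proof
    assume a: "\<forall>X\<in>mk P S. blkok A X"
    show "(\<forall>B\<in>S. card B = 1) \<and> (\<forall>B\<in>P-S. sz A (card B))"
    proof (intro conjI ballI)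
      fix B assume "B \<in> S"
      then have "blkok A (tp B \<union> bt B)" using a by (auto simp: mk_mem)
      then show "card B = 1" using blkok_tpbt fb \<open>B \<in> S\<close> S by blast
    next
      fix B assume "B \<in> P - S"
      then have "blkok A (tp B)" using a by (auto simp: mk_mem)
      then show "sz A (card B)" using blkok_tp fb \<open>B \<in> P - S\<close> by blast
    qed
  next
    assume a: "(\<forall>B\<in>S. card B = 1) \<and> (\<forall>B\<in>P-S. sz A (card B))"
    show "\<forall>X\<in>mk P S. blkok A X"
    proof
      fix X assume "X \<in> mk P S"
      then consider B where "B \<in> S" "X = tp B \<union> bt B" | B where "B \<in> P - S" "X = tp B"
        | B where "B \<in> P - S" "X = bt B" by (auto simp: mk_mem)
      then show "blkok A X"
      proof cases
        case 1 then show ?thesis using a fb S blkok_tpbt by auto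
      next
        case 2 then show ?thesis using a fb blkok_tp by auto
      next
        case 3 then show ?thesis using a fb blkok_bt by auto
      qed
    qed
  qed
qed

lemma planarD: "planar k d \<Longrightarrow> X1\<in>d \<Longrightarrow> X2\<in>d \<Longrightarrow> X1\<noteq>X2 \<Longrightarrow> a\<in>X1 \<Longrightarrow> c\<in>X1
   \<Longrightarrow> b\<in>X2 \<Longrightarrow> e\<in>X2 \<Longrightarrow> cpos k a < cpos k b \<Longrightarrow> cpos k b < cpos k c \<Longrightarrow> cpos k c < cpos k e \<Longrightarrow> False"
proof -
  assume h: "planar k d" "X1\<in>d" "X2\<in>d" "X1\<noteq>X2" "a\<in>X1" "c\<in>X1" "b\<in>X2" "e\<in>X2"
    "cpos k a < cpos k b" "cpos k b < cpos k c" "cpos k c < cpos k e"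
  have "\<not>(\<exists>a\<in>X1. \<exists>c\<in>X1. \<exists>b\<in>X2. \<exists>e\<in>X2. cpos k a < cpos k b \<and> cpos k b < cpos k c \<and> cpos k c < cpos k e)"
    by (rule h(1)[unfolded planar_def, THEN bspec, OF h(2), THEN bspec, OF h(3), THEN mp, OF h(4)])
  moreover have "\<exists>a\<in>X1. \<exists>c\<in>X1. \<exists>b\<in>X2. \<exists>e\<in>X2. cpos k a < cpos k b \<and> cpos k b < cpos k c \<and> cpos k c < cpos k e"
    by (intro bexI conjI; fact)
  ultimately show False by (rule notE)
qed

lemma planarI: "(\<And>X1 X2 a b c e. X1\<in>d \<Longrightarrow> X2\<in>d \<Longrightarrow> X1\<noteq>X2 \<Longrightarrow> a\<in>X1 \<Longrightarrow> c\<in>X1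
   \<Longrightarrow> b\<in>X2 \<Longrightarrow> e\<in>X2 \<Longrightarrow> cpos k a < cpos k b \<Longrightarrow> cpos k b < cpos k c \<Longrightarrow> cpos k c < cpos k e \<Longrightarrow> False) \<Longrightarrow> planar k d"
  unfolding planar_def by (intro ballI impI notI, elim bexE conjE) metis

lemma mk_planar:
  assumes p: "partition_on {1..k} P" and S: "S \<subseteq> P" and sing: "\<forall>B\<in>S. card B = 1"
  shows "planar k (mk P S) \<longleftrightarrow> noncross P \<and> noencl P S"
proof -
  have blk: "B \<in> P \<Longrightarrow> B \<subseteq> {1..k}" for B using p unfolding pon_iff by blast
  have sj: "B \<in> S \<Longrightarrow> \<exists>j. B = {j}" for B using sing by (metis card_1_singletonE)
  show ?thesis
  proof
    assume pl: "planar k (mk P S)"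
    define X where "X B = (if B \<in> S then tp B \<union> bt B else tp B)" for B
    have XP: "B \<in> P \<Longrightarrow> X B \<in> mk P S" for B unfolding X_def by (auto simp: mk_mem)
    have Xi: "i \<in> B \<Longrightarrow> (True,i) \<in> X B" for i B unfolding X_def by auto
    have Xne: "B1 \<noteq> B2 \<Longrightarrow> X B1 \<noteq> X B2" for B1 B2
    proof
      assume "B1 \<noteq> B2" "X B1 = X B2"
      then have "{i. (True,i) \<in> X B1} = {i. (True,i) \<in> X B2}" by simp
      then show False using \<open>B1 \<noteq> B2\<close> unfolding X_def by (auto split: if_splits)
    qed
    have nc: "noncross P"
    proof (rule noncrossI)
      fix B1 B2 a b c e assume h: "B1\<in>P" "B2\<in>P" "B1\<noteq>B2" "a\<in>B1" "c\<in>B1" "b\<in>B2" "e\<in>B2" "a<b" "b<c" "c<e"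
      show False by (rule planarD[OF pl XP[OF h(1)] XP[OF h(2)] Xne[OF h(3)] Xi[OF h(4)] Xi[OF h(5)] Xi[OF h(6)] Xi[OF h(7)]])
        (use h in auto)
    qed
    have ne: "noencl P S"
    proof (rule noenclI)
      fix B j a c assume h: "B\<in>P" "B \<notin> S" "{j}\<in>S" "a\<in>B" "c\<in>B" "a<j" "j<c"
      have X1: "tp B \<in> mk P S" using h by (auto simp: mk_mem)
      have X2: "tp {j} \<union> bt {j} \<in> mk P S" using h by (auto simp: mk_mem)
      have "B \<noteq> {}" using h by auto
      then have X12: "tp B \<noteq> tp {j} \<union> bt {j}" by (metis tpbt_tp_eq)
      have "c \<le> k" "j \<le> k" using blk[OF h(1)] blk[of "{j}"] h S by auto
      show False
        by (rule planarD[OF pl X1 X2 X12, of "(True,a)" "(True,c)" "(True,j)" "(False,j)"])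
          (use h \<open>c \<le> k\<close> \<open>j \<le> k\<close> in auto)
    qed
    show "noncross P \<and> noencl P S" using nc ne by simp
  next
    assume a: "noncross P \<and> noencl P S"
    then have nc: "noncross P" and ne: "noencl P S" by auto
    have kind: "X \<in> mk P S \<Longrightarrow> (\<exists>B. B \<in> P \<and> B \<notin> S \<and> X = tp B) \<or> (\<exists>B. B \<in> P \<and> B \<notin> S \<and> X = bt B)
       \<or> (\<exists>j. {j} \<in> S \<and> X = {(True,j),(False,j)})" for X
    proof -
      assume "X \<in> mk P S"
      then consider B where "B \<in> S" "X = tp B \<union> bt B" | B where "B \<in> P - S" "X = tp B"
        | B where "B \<in> P - S" "X = bt B" by (auto simp: mk_mem)
      then show ?thesis
      proof cases
        case 1
        then obtain j where "B = {j}" using sj by blast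
        then have "X = {(True,j),(False,j)}" using 1 by (auto simp: tp_def bt_def)
        then show ?thesis using 1 \<open>B = {j}\<close> by blast
      qed blast+
    qed
    have vk: "X \<in> mk P S \<Longrightarrow> v \<in> X \<Longrightarrow> snd v \<in> {1..k}" for X v
    proof -
      assume "X \<in> mk P S" "v \<in> X"
      moreover obtain t i where v: "v = (t,i)" by (cases v)
      ultimately consider B where "B \<in> S" "(t,i) \<in> tp B \<union> bt B" | B where "B \<in> P - S" "(t,i) \<in> tp B"
        | B where "B \<in> P - S" "(t,i) \<in> bt B" unfolding mk_mem by blast
      then obtain B where "B \<in> P" "i \<in> B" using S by cases auto
      then show ?thesis using blk[OF \<open>B \<in> P\<close>] v by auto
    qed
    show "planar k (mk P S)"
    proof (rule planarI)
      fix X1 X2 a b c e assume h: "X1\<in>mk P S" "X2\<in>mk P S" "X1\<noteq>X2" "a\<in>X1" "c\<in>X1"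
        "b\<in>X2" "e\<in>X2" "cpos k a < cpos k b" "cpos k b < cpos k c" "cpos k c < cpos k e"
      obtain ta ia where av: "a = (ta,ia)" by (cases a)
      obtain tb ib where bv: "b = (tb,ib)" by (cases b)
      obtain tc ic where cv: "c = (tc,ic)" by (cases c)
      obtain te ie where ev: "e = (te,ie)" by (cases e)
      have rng: "ia \<in> {1..k}" "ib \<in> {1..k}" "ic \<in> {1..k}" "ie \<in> {1..k}"
        using vk[OF h(1) h(4)] vk[OF h(1) h(5)] vk[OF h(2) h(6)] vk[OF h(2) h(7)] av bv cv ev by auto
      note pos = h(8-10)[unfolded av bv cv ev]
      from kind[OF h(1)] show False
      proof (elim disjE exE conjE)
        fix B1 assume B1: "B1 \<in> P" "B1 \<notin> S" "X1 = tp B1"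
        then have at: "ta" "tc" "ia \<in> B1" "ic \<in> B1" using h(4,5) av cv by auto
        then have btop: "tb" using pos rng by (cases tb) auto
        from kind[OF h(2)] show False
        proof (elim disjE exE conjE)
          fix B2 assume B2: "B2 \<in> P" "B2 \<notin> S" "X2 = tp B2"
          then have "te" "ib \<in> B2" "ie \<in> B2" using h(6,7) bv ev by auto
          then show False using noncrossD[OF nc B1(1) B2(1) _ at(3) at(4) \<open>ib \<in> B2\<close> \<open>ie \<in> B2\<close>]
            h(3) B1 B2 pos at btop by auto
        next
          fix B2 assume "X2 = bt B2" then show False using h(6) bv btop by auto
        next
          fix j assume j: "{j} \<in> S" "X2 = {(True,j),(False,j)}"
          then have "ib = j" using h(6) bv btop by auto
          then show False using noenclD[OF ne B1(1) B1(2) j(1) at(3) at(4)] pos at btop by auto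
        qed
      next
        fix B1 assume B1: "B1 \<in> P" "B1 \<notin> S" "X1 = bt B1"
        then have at: "\<not>ta" "\<not>tc" "ia \<in> B1" "ic \<in> B1" using h(4,5) av cv by auto
        then have bbot: "\<not>tb" using pos rng by (cases tb) auto
        then have ebot: "\<not>te" using pos rng at by (cases te) auto
        from kind[OF h(2)] show False
        proof (elim disjE exE conjE)
          fix B2 assume "X2 = tp B2" then show False using h(6) bv bbot by auto
        next
          fix B2 assume B2: "B2 \<in> P" "B2 \<notin> S" "X2 = bt B2"
          then have "ib \<in> B2" "ie \<in> B2" using h(6,7) bv ev by auto
          have "B2 \<noteq> B1" using h(3) B1 B2 by auto
          moreover have "ie < ic" "ic < ib" "ib < ia" using pos at bbot ebot rng by auto
          ultimately show False using noncrossD[OF nc B2(1) B1(1) \<open>B2 \<noteq> B1\<close> \<open>ie \<in> B2\<close> \<open>ib \<in> B2\<close> at(4) at(3)]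
            by blast
        next
          fix j assume j: "{j} \<in> S" "X2 = {(True,j),(False,j)}"
          then show False using h(6,7) bv ev bbot ebot pos by auto
        qed
      next
        fix j assume j: "{j} \<in> S" "X1 = {(True,j),(False,j)}"
        then have aj: "a = (True,j)" "c = (False,j)" using h(4,5) pos av cv rng by auto
        have jk: "j \<in> {1..k}" using rng aj av by auto
        have ebot: "\<not>te" "ie < j" using pos aj ev cv rng jk by (cases te; auto)+
        from kind[OF h(2)] show False
        proof (elim disjE exE conjE)
          fix B2 assume "X2 = tp B2" then show False using h(7) ev ebot by auto
        next
          fix B2 assume B2: "B2 \<in> P" "B2 \<notin> S" "X2 = bt B2"
          then have "\<not> tb" "ib \<in> B2" "ie \<in> B2" using h(6,7) bv ev by auto
          then have "j < ib" using pos aj av cv rng jk by auto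
          then show False using noenclD[OF ne B2(1) B2(2) j(1) \<open>ie \<in> B2\<close> \<open>ib \<in> B2\<close>] ebot by auto
        next
          fix l assume l: "{l} \<in> S" "X2 = {(True,l),(False,l)}"
          then have "e = (False,l)" using h(7) ebot ev by auto
          then show False using h(6) l pos aj bv ev cv av rng jk by auto
        qed
      qed
    qed
  qed
qed

lemma in_alg_mk:
  assumes p: "partition_on {1..k} P" and S: "S \<subseteq> P"
  shows "in_alg A k (mk P S) \<longleftrightarrow> good A k P S"
proof -
  have pk: "mk P S \<in> Pk k" using mk_pon[OF p S] by (simp add: Pk_def)
  show ?thesis
  proof
    assume "in_alg A k (mk P S)"
    then have pl: "planar k (mk P S)" and bl: "\<forall>X\<in>mk P S. blkok A X" by (auto simp: in_alg_blkok)
    then have sb: "(\<forall>B\<in>S. card B = 1) \<and> (\<forall>B\<in>P-S. sz A (card B))" using mk_blkok[OF p S] by blast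
    then have "noncross P \<and> noencl P S" using mk_planar[OF p S] pl by blast
    then show "good A k P S" using p S sb by (simp add: good_def)
  next
    assume g: "good A k P S"
    then have sb: "(\<forall>B\<in>S. card B = 1) \<and> (\<forall>B\<in>P-S. sz A (card B))" by (simp add: good_def)
    then have "\<forall>X\<in>mk P S. blkok A X" using mk_blkok[OF p S] by blast
    moreover have "planar k (mk P S)" using mk_planar[OF p S] sb g by (simp add: good_def)
    ultimately show "in_alg A k (mk P S)" using pk by (simp add: in_alg_blkok)
  qed
qed

lemma module_basis_eq: "module_basis A k m = {mk P S | P S. good A k P S \<and> card S = m}"
  unfolding module_basis_def sym_diag_iff
  using in_alg_mk by (auto simp: good_def) blast+

lemma stack_rel_sym: "sym (stack_rel d1 d2)"
  unfolding sym_def stack_rel_def by blast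

lemma rtr_sym: "(x,y) \<in> (stack_rel d1 d2)\<^sup>* \<Longrightarrow> (y,x) \<in> (stack_rel d1 d2)\<^sup>*"
  using sym_rtrancl[OF stack_rel_sym, of d1 d2] unfolding sym_def by blast

lemma comp_mem: "C \<in> components d1 d2 \<longleftrightarrow> (\<exists>x\<in>stack_verts d1 d2. C = (stack_rel d1 d2)\<^sup>* `` {x})"
  unfolding components_def quotient_def by blast

lemma comp_disj:
  assumes "C1 \<in> components d1 d2" "C2 \<in> components d1 d2" "x \<in> C1" "x \<in> C2"
  shows "C1 = C2"
proof -
  let ?R = "(stack_rel d1 d2)\<^sup>*"
  obtain x1 x2 where c: "C1 = ?R `` {x1}" "C2 = ?R `` {x2}" using assms(1,2) by (auto simp: comp_mem)
  have "(x1,x) \<in> ?R" "(x2,x) \<in> ?R" using assms(3,4) c by auto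
  then have x12: "(x1,x2) \<in> ?R" using rtr_sym by (meson rtrancl_trans)
  then have x21: "(x2,x1) \<in> ?R" using rtr_sym by blast
  show ?thesis unfolding c using x12 x21 by (auto intro: rtrancl_trans)
qed

lemma comps_char:
  assumes sub: "\<forall>C\<in>Cs. C \<subseteq> stack_verts d1 d2 \<and> C \<noteq> {}"
    and cov: "\<forall>x\<in>stack_verts d1 d2. \<exists>C\<in>Cs. x\<in>C"
    and disj: "\<forall>C1\<in>Cs. \<forall>C2\<in>Cs. \<forall>x. x\<in>C1 \<longrightarrow> x\<in>C2 \<longrightarrow> C1=C2"
    and edge: "\<forall>x y. (x,y) \<in> stack_rel d1 d2 \<longrightarrow> (\<exists>C\<in>Cs. x\<in>C \<and> y\<in>C)"
    and conn: "\<forall>C\<in>Cs. \<forall>x\<in>C. \<forall>y\<in>C. (x,y) \<in> (stack_rel d1 d2)\<^sup>*"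
  shows "components d1 d2 = Cs"
proof -
  let ?R = "(stack_rel d1 d2)\<^sup>*"
  have key: "C \<in> Cs \<Longrightarrow> x \<in> C \<Longrightarrow> ?R `` {x} = C" for C x
  proof -
    assume C: "C \<in> Cs" "x \<in> C"
    have "(x,y) \<in> ?R \<Longrightarrow> y \<in> C" for y
    proof (induction rule: rtrancl_induct)
      case base then show ?case using C by simp
    next
      case (step y z)
      then obtain C' where "C' \<in> Cs" "y \<in> C'" "z \<in> C'" using edge by blast
      then show ?case using disj C step by blast
    qed
    moreover have "y \<in> C \<Longrightarrow> (x,y) \<in> ?R" for y using conn C by blast
    ultimately show ?thesis by blast
  qed
  show ?thesis
  proof (rule set_eqI, rule iffI)
    fix C assume "C \<in> components d1 d2"
    then obtain x where x: "x \<in> stack_verts d1 d2" "C = ?R `` {x}" by (auto simp: comp_mem)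
    then obtain C' where "C' \<in> Cs" "x \<in> C'" using cov by blast
    then show "C \<in> Cs" using key x by simp
  next
    fix C assume C: "C \<in> Cs"
    then obtain x where "x \<in> C" using sub by blast
    then have "x \<in> stack_verts d1 d2" "C = ?R `` {x}" using key C sub by auto
    then show "C \<in> components d1 d2" by (auto simp: comp_mem)
  qed
qed

lemma up3_top: "fst v \<Longrightarrow> up3 v = (0, snd v)" by (cases v) auto
lemma back3_up3_top: "fst v \<Longrightarrow> back3 (up3 v) = v" by (cases v) auto
lemma up3_inj: "up3 v = up3 w \<Longrightarrow> v = w" by (cases v; cases w) (auto split: if_splits)
lemma dn3_inj: "dn3 v = dn3 w \<Longrightarrow> v = w" by (cases v; cases w) (auto split: if_splits)
lemma dn3_fst: "fst (dn3 v) \<noteq> 0" by (cases v) auto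

lemma topblock:
  assumes B: "B \<in> d1" "B \<noteq> {}" "\<forall>v\<in>B. fst v" and uq: "\<forall>B'\<in>d1. B' \<inter> B \<noteq> {} \<longrightarrow> B' = B"
  shows "B \<in> comp_diag d1 d2 \<and> (\<forall>B'\<in>comp_diag d1 d2. B' \<inter> B \<noteq> {} \<longrightarrow> B' = B)"
proof -
  let ?R = "(stack_rel d1 d2)\<^sup>*"
  obtain v0 where v0: "v0 \<in> B" using B by auto
  define C0 where "C0 = ?R `` {up3 v0}"
  have V: "up3 v0 \<in> stack_verts d1 d2" using v0 B unfolding stack_verts_def by auto
  then have C0c: "C0 \<in> components d1 d2" unfolding C0_def by (auto simp: comp_mem)
  have "(up3 v0, y) \<in> ?R \<Longrightarrow> y \<in> up3 ` B" for y
  proof (induction rule: rtrancl_induct)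
    case base then show ?case using v0 by simp
  next
    case (step y z)
    then obtain v where v: "v \<in> B" "y = up3 v" by auto
    from step(2) show ?case unfolding stack_rel_def
    proof (elim CollectE case_prodE disjE bexE conjE)
      fix B' a b assume h: "(y,z) = (a,b)" "B' \<in> d1" "a \<in> up3 ` B'" "b \<in> up3 ` B'"
      then obtain v' where "v' \<in> B'" "up3 v' = y" by auto
      then have "v' = v" using v up3_inj by auto
      then have "B' = B" using uq h(2) \<open>v' \<in> B'\<close> v by blast
      then show ?thesis using h by auto
    next
      fix B' a b assume h: "(y,z) = (a,b)" "B' \<in> d2" "a \<in> dn3 ` B'" "b \<in> dn3 ` B'"
      then obtain v' where "up3 v = dn3 v'" using v by auto
      moreover have "fst (up3 v) = 0" using B(3) v up3_top[of v] by auto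
      ultimately show ?thesis using dn3_fst[of v'] by simp
    qed
  qed
  moreover have "y \<in> up3 ` B \<Longrightarrow> (up3 v0, y) \<in> ?R" for y
  proof -
    assume "y \<in> up3 ` B"
    then have "(up3 v0, y) \<in> stack_rel d1 d2" using v0 B unfolding stack_rel_def by blast
    then show ?thesis by blast
  qed
  ultimately have C0e: "C0 = up3 ` B" unfolding C0_def by blast
  have nm: "C0 \<inter> {v. fst v \<noteq> 1} = C0" using C0e B(3) up3_top by auto
  have bk: "back3 ` C0 = B" using C0e B(3) back3_up3_top by (auto simp: image_image)
  have inB: "B \<in> comp_diag d1 d2" unfolding comp_diag_def
    using C0c nm bk B(2) by (smt (verit) image_is_empty mem_Collect_eq)
  have "\<forall>B'\<in>comp_diag d1 d2. B' \<inter> B \<noteq> {} \<longrightarrow> B' = B"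
  proof (intro ballI impI)
    fix B' assume B': "B' \<in> comp_diag d1 d2" "B' \<inter> B \<noteq> {}"
    then obtain C where C: "C \<in> components d1 d2" "B' = back3 ` (C \<inter> {v. fst v \<noteq> 1})"
      unfolding comp_diag_def by blast
    obtain v where "v \<in> B'" "v \<in> B" using B' by auto
    then obtain y where y: "y \<in> C" "fst y \<noteq> 1" "back3 y = v" using C by auto
    have "fst v" using B(3) \<open>v \<in> B\<close> by auto
    then have "y = up3 v" using y up3_top[of v] by (cases y) (auto split: if_splits)
    then have "y \<in> C0" using C0e \<open>v \<in> B\<close> by auto
    then have "C = C0" using comp_disj[OF C(1) C0c] y by auto
    then show "B' = B" using C nm bk by simp
  qed
  then show ?thesis using inB by simp
qed

lemma pon_cov: "partition_on A P \<Longrightarrow> x \<in> A \<Longrightarrow> \<exists>B\<in>P. x \<in> B"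
  unfolding partition_on_def by blast
lemma pon_disj: "partition_on A P \<Longrightarrow> B1 \<in> P \<Longrightarrow> B2 \<in> P \<Longrightarrow> x \<in> B1 \<Longrightarrow> x \<in> B2 \<Longrightarrow> B1 = B2"
  unfolding partition_on_def disjoint_def by blast
lemma pon_sub: "partition_on A P \<Longrightarrow> B \<in> P \<Longrightarrow> B \<subseteq> A \<and> B \<noteq> {}"
  unfolding partition_on_def by blast

definition sng :: "nat \<Rightarrow> nat set set" where "sng r = (\<lambda>i. {i}) ` {1..r}"

lemma stack_verts_full:
  assumes "partition_on (verts k) d1" "partition_on (verts k) d2"
  shows "stack_verts d1 d2 = {(a,i). a \<le> (2::nat) \<and> i \<in> {1..k}}"
proof -
  have u1: "\<Union>d1 = verts k" "\<Union>d2 = verts k" using assms by (auto simp: partition_on_def)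
  have "stack_verts d1 d2 = up3 ` (\<Union>d1) \<union> dn3 ` (\<Union>d2)" unfolding stack_verts_def by auto
  also have "\<dots> = up3 ` verts k \<union> dn3 ` verts k" using u1 by simp
  also have "\<dots> = {(a,i). a \<le> (2::nat) \<and> i \<in> {1..k}}"
  proof (rule set_eqI, rule iffI)
    fix x assume "x \<in> up3 ` verts k \<union> dn3 ` verts k"
    then show "x \<in> {(a,i). a \<le> (2::nat) \<and> i \<in> {1..k}}" by (auto simp: verts_def)
  next
    fix x assume "x \<in> {(a,i). a \<le> (2::nat) \<and> i \<in> {1..k}}"
    then obtain a i where x: "x = (a,i)" "a \<le> (2::nat)" "i \<in> {1..k}" by auto
    then consider "a = 0" | "a = 1" | "a = 2" by linarith
    then show "x \<in> up3 ` verts k \<union> dn3 ` verts k"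
    proof cases
      case 1 then have "x = up3 (True,i)" using x by simp
      then show ?thesis using x by (intro UnI1 image_eqI[of _ _ "(True,i)"]) (auto simp: verts_def)
    next
      case 2 then have "x = up3 (False,i)" using x by simp
      then show ?thesis using x by (intro UnI1 image_eqI[of _ _ "(False,i)"]) (auto simp: verts_def)
    next
      case 3 then have "x = dn3 (False,i)" using x by simp
      then show ?thesis using x by (intro UnI2 image_eqI[of _ _ "(False,i)"]) (auto simp: verts_def)
    qed
  qed
  finally show ?thesis .
qed

locale cs =
  fixes k r :: nat and P S F :: "nat set set"
  assumes p: "partition_on {1..k} P" and SP: "S \<subseteq> P" and FP: "F \<subseteq> P - S"
    and Fr: "\<forall>E\<in>F. E \<subseteq> {r+1..k}" and p0: "partition_on {1..k} (sng r \<union> F)" and rk: "r \<le> k"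
begin

definition "w = mk P S"
definition "d0 = mk (sng r \<union> F) (sng r)"

lemma wpon: "partition_on (verts k) w" unfolding w_def using mk_pon[OF p SP] .
lemma d0pon: "partition_on (verts k) d0" unfolding d0_def using mk_pon[OF p0] by auto

lemma w_disj: "X1 \<in> w \<Longrightarrow> X2 \<in> w \<Longrightarrow> v \<in> X1 \<Longrightarrow> v \<in> X2 \<Longrightarrow> X1 = X2"
  using pon_disj[OF wpon] by blast
lemma w_cov: "v \<in> verts k \<Longrightarrow> \<exists>X\<in>w. v \<in> X"
  using pon_cov[OF wpon] by blast
lemma w_sub: "X \<in> w \<Longrightarrow> X \<subseteq> verts k \<and> X \<noteq> {}"
  using pon_sub[OF wpon] by blast

lemma F_ne: "E \<in> F \<Longrightarrow> E \<noteq> {}" using pon_sub[OF p0] by blast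
lemma F_disj: "E1 \<in> F \<Longrightarrow> E2 \<in> F \<Longrightarrow> i \<in> E1 \<Longrightarrow> i \<in> E2 \<Longrightarrow> E1 = E2" using pon_disj[OF p0] by blast
lemma F_cov: "i \<in> {r+1..k} \<Longrightarrow> \<exists>E\<in>F. i \<in> E"
proof -
  assume i: "i \<in> {r+1..k}"
  then have "i \<in> {1..k}" by auto
  then obtain B where "B \<in> sng r \<union> F" "i \<in> B" using pon_cov[OF p0] by blast
  then show ?thesis using i by (auto simp: sng_def)
qed

lemma tpF: "E \<in> F \<Longrightarrow> tp E \<in> w" using FP unfolding w_def by (auto simp: mk_mem)
lemma btF: "E \<in> F \<Longrightarrow> bt E \<in> w" using FP unfolding w_def by (auto simp: mk_mem)

lemma w_kinds: "X \<in> w \<Longrightarrow> v \<in> X \<Longrightarrow> \<exists>B\<in>P. snd v \<in> B \<and> (B \<in> S \<and> X = tp B \<union> bt B \<or> B \<notin> S \<and> X = tp B \<and> fst v \<or> B \<notin> S \<and> X = bt B \<and> \<not> fst v)"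
proof -
  assume "X \<in> w" "v \<in> X"
  moreover obtain t i where v: "v = (t,i)" by (cases v)
  ultimately consider B where "B \<in> S" "X = tp B \<union> bt B" | B where "B \<in> P - S" "X = tp B"
    | B where "B \<in> P - S" "X = bt B" unfolding w_def mk_mem by blast
  then show ?thesis using SP \<open>v \<in> X\<close> v by cases auto
qed

lemma key_top: "X \<in> w \<Longrightarrow> (True,i) \<in> X \<Longrightarrow> r < i \<Longrightarrow> \<exists>E\<in>F. X = tp E"
proof -
  assume X: "X \<in> w" "(True,i) \<in> X" "r < i"
  have "i \<in> {1..k}" using w_sub[OF X(1)] X(2) by (auto simp: verts_def)
  then have "i \<in> {r+1..k}" using X(3) by auto
  then obtain E where E: "E \<in> F" "i \<in> E" using F_cov by blast
  obtain B where B: "B \<in> P" "i \<in> B" "B \<in> S \<and> X = tp B \<union> bt B \<or> B \<notin> S \<and> X = tp B \<or> B \<notin> S \<and> X = bt B"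
    using w_kinds[OF X(1,2)] by auto
  have "E \<in> P" "E \<notin> S" using E FP by auto
  then have "B = E" using pon_disj[OF p] B E by blast
  then show ?thesis using B(3) X(2) \<open>E \<notin> S\<close> E by auto
qed

lemma key_bot: "X \<in> w \<Longrightarrow> (False,i) \<in> X \<Longrightarrow> r < i \<Longrightarrow> \<exists>E\<in>F. X = bt E"
proof -
  assume X: "X \<in> w" "(False,i) \<in> X" "r < i"
  have "i \<in> {1..k}" using w_sub[OF X(1)] X(2) by (auto simp: verts_def)
  then have "i \<in> {r+1..k}" using X(3) by auto
  then obtain E where E: "E \<in> F" "i \<in> E" using F_cov by blast
  obtain B where B: "B \<in> P" "i \<in> B" "B \<in> S \<and> X = tp B \<union> bt B \<or> B \<notin> S \<and> X = tp B \<or> B \<notin> S \<and> X = bt B"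
    using w_kinds[OF X(1,2)] by auto
  have "E \<in> P" "E \<notin> S" using E FP by auto
  then have "B = E" using pon_disj[OF p] B E by blast
  then show ?thesis using B(3) X(2) \<open>E \<notin> S\<close> E by auto
qed

lemma d0_kinds: "X \<in> d0 \<Longrightarrow> (\<exists>i\<in>{1..r}. X = {(True,i),(False,i)}) \<or> (\<exists>E\<in>F. X = tp E) \<or> (\<exists>E\<in>F. X = bt E)"
  unfolding d0_def mk_mem by (auto simp: sng_def tp_def bt_def)

lemma d0_id: "i \<in> {1..r} \<Longrightarrow> {(True,i),(False,i)} \<in> d0"
proof -
  assume "i \<in> {1..r}"
  then have "{i} \<in> sng r" by (auto simp: sng_def)
  moreover have "tp {i} \<union> bt {i} = {(True,i),(False,i)}" by (auto simp: tp_def bt_def)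
  ultimately show ?thesis unfolding d0_def mk_mem by blast
qed

lemma d0_tp: "E \<in> F \<Longrightarrow> tp E \<in> d0" and d0_bt: "E \<in> F \<Longrightarrow> bt E \<in> d0"
proof -
  assume "E \<in> F"
  moreover have "E \<notin> sng r" using \<open>E \<in> F\<close> Fr F_ne by (force simp: sng_def)
  ultimately show "tp E \<in> d0" "bt E \<in> d0" unfolding d0_def mk_mem by blast+
qed

end

lemma relI1: "B \<in> d1 \<Longrightarrow> x \<in> up3 ` B \<Longrightarrow> y \<in> up3 ` B \<Longrightarrow> (x,y) \<in> stack_rel d1 d2"
  unfolding stack_rel_def by blast
lemma relI2: "B \<in> d2 \<Longrightarrow> x \<in> dn3 ` B \<Longrightarrow> y \<in> dn3 ` B \<Longrightarrow> (x,y) \<in> stack_rel d1 d2"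
  unfolding stack_rel_def by blast

lemma up3_tp: "up3 ` tp E = {(0,i) | i. i \<in> E}" by (auto simp: tp_def image_image)
lemma dn3_tp: "dn3 ` tp E = {(1,i) | i. i \<in> E}" by (auto simp: tp_def image_image)
lemma up3_bt: "up3 ` bt E = {(1,i) | i. i \<in> E}" by (auto simp: bt_def image_image)
lemma dn3_bt: "dn3 ` bt E = {(2,i) | i. i \<in> E}" by (auto simp: bt_def image_image)

lemma dn3_mem: "(a,i) \<in> dn3 ` X \<longleftrightarrow> (a = 1 \<and> (True,i) \<in> X) \<or> (a = 2 \<and> (False,i) \<in> X)"
proof
  assume "(a,i) \<in> dn3 ` X"
  then obtain v where "v \<in> X" "dn3 v = (a,i)" by auto
  then show "(a = 1 \<and> (True,i) \<in> X) \<or> (a = 2 \<and> (False,i) \<in> X)" by (cases v) (auto split: if_splits)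
next
  assume "(a = 1 \<and> (True,i) \<in> X) \<or> (a = 2 \<and> (False,i) \<in> X)"
  then show "(a,i) \<in> dn3 ` X" by (auto intro: image_eqI[of _ _ "(True,i)"] image_eqI[of _ _ "(False,i)"])
qed

lemma up3_mem: "(a,i) \<in> up3 ` X \<longleftrightarrow> (a = 0 \<and> (True,i) \<in> X) \<or> (a = 1 \<and> (False,i) \<in> X)"
proof
  assume "(a,i) \<in> up3 ` X"
  then obtain v where "v \<in> X" "up3 v = (a,i)" by auto
  then show "(a = 0 \<and> (True,i) \<in> X) \<or> (a = 1 \<and> (False,i) \<in> X)" by (cases v) (auto split: if_splits)
next
  assume "(a = 0 \<and> (True,i) \<in> X) \<or> (a = 1 \<and> (False,i) \<in> X)"
  then show "(a,i) \<in> up3 ` X" by (auto intro: image_eqI[of _ _ "(True,i)"] image_eqI[of _ _ "(False,i)"])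
qed

context cs begin

definition cls :: "vtx set \<Rightarrow> (nat \<times> nat) set" where
  "cls X = dn3 ` X \<union> {(0,i) | i. (True,i) \<in> X}"
definition UU :: "nat set \<Rightarrow> (nat \<times> nat) set" where "UU E = {(0,i) | i. i \<in> E}"
definition DD :: "nat set \<Rightarrow> (nat \<times> nat) set" where "DD E = {(1,i) | i. i \<in> E}"
definition "Cs1 = cls ` (w - tp ` F) \<union> UU ` F \<union> DD ` F"

lemma cls_mem: "(a,i) \<in> cls X \<longleftrightarrow> ((a = 0 \<or> a = 1) \<and> (True,i) \<in> X) \<or> (a = 2 \<and> (False,i) \<in> X)"
  unfolding cls_def Un_iff dn3_mem by auto

lemma UU_mem: "(a,i) \<in> UU E \<longleftrightarrow> a = 0 \<and> i \<in> E" unfolding UU_def by auto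
lemma DD_mem: "(a,i) \<in> DD E \<longleftrightarrow> a = 1 \<and> i \<in> E" unfolding DD_def by auto

lemma ver: "X \<in> w \<Longrightarrow> (t,i) \<in> X \<Longrightarrow> i \<in> {1..k}"
proof -
  assume "X \<in> w" "(t,i) \<in> X"
  then have "(t,i) \<in> verts k" using w_sub by blast
  then show ?thesis by (simp add: verts_def)
qed

lemma nF_top: "X \<in> w \<Longrightarrow> X \<notin> tp ` F \<Longrightarrow> (True,i) \<in> X \<Longrightarrow> i \<in> {1..r}"
proof -
  assume X: "X \<in> w" "X \<notin> tp ` F" "(True,i) \<in> X"
  have "i \<ge> 1" using ver[OF X(1) X(3)] by simp
  moreover have "\<not> r < i" using key_top[OF X(1) X(3)] X(2) by auto
  ultimately show ?thesis by auto
qed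

lemma Fsub: "E \<in> F \<Longrightarrow> i \<in> E \<Longrightarrow> i \<in> {r+1..k}" using Fr by blast

lemma tpF_notin: "E \<in> F \<Longrightarrow> i \<in> E \<Longrightarrow> X \<in> w \<Longrightarrow> (True,i) \<in> X \<Longrightarrow> X = tp E"
  using w_disj[OF _ tpF, of X E "(True,i)"] by auto

lemma notin_tpF: "(True,i) \<in> X \<Longrightarrow> i \<le> r \<Longrightarrow> X \<notin> tp ` F"
proof
  assume h: "(True,i) \<in> X" "i \<le> r" "X \<in> tp ` F"
  then obtain E where "E \<in> F" "X = tp E" by auto
  then have "i \<in> E" using h by auto
  then show False using Fsub[OF \<open>E \<in> F\<close> \<open>i \<in> E\<close>] h by auto
qed

lemma comp1: "components d0 w = Cs1"
proof (rule comps_char)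
  have V: "stack_verts d0 w = {(a,i). a \<le> (2::nat) \<and> i \<in> {1..k}}" by (rule stack_verts_full[OF d0pon wpon])
  show "\<forall>C\<in>Cs1. C \<subseteq> stack_verts d0 w \<and> C \<noteq> {}"
  proof
    fix C assume "C \<in> Cs1"
    then consider X where "X \<in> w" "X \<notin> tp ` F" "C = cls X" | E where "E \<in> F" "C = UU E" | E where "E \<in> F" "C = DD E"
      unfolding Cs1_def by blast
    then show "C \<subseteq> stack_verts d0 w \<and> C \<noteq> {}"
    proof cases
      case 1
      have "C \<subseteq> stack_verts d0 w" unfolding V
      proof
        fix x assume "x \<in> C"
        moreover obtain a i where "x = (a,i)" by (cases x)
        ultimately show "x \<in> {(a,i). a \<le> (2::nat) \<and> i \<in> {1..k}}" using 1 cls_mem ver by auto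
      qed
      moreover obtain v where "v \<in> X" using w_sub 1 by blast
      then have "dn3 v \<in> C" using 1 by (auto simp: cls_def)
      ultimately show ?thesis by auto
    next
      case 2
      have "C \<subseteq> stack_verts d0 w" unfolding V
      proof
        fix x assume "x \<in> C"
        then obtain i where "x = (0,i)" "i \<in> E" using 2 by (auto simp: UU_def)
        then show "x \<in> {(a,i). a \<le> (2::nat) \<and> i \<in> {1..k}}" using Fsub[OF 2(1)] by force
      qed
      then show ?thesis using F_ne[OF 2(1)] 2 by (auto simp: UU_def)
    next
      case 3
      have "C \<subseteq> stack_verts d0 w" unfolding V
      proof
        fix x assume "x \<in> C"
        then obtain i where "x = (1,i)" "i \<in> E" using 3 by (auto simp: DD_def)
        then show "x \<in> {(a,i). a \<le> (2::nat) \<and> i \<in> {1..k}}" using Fsub[OF 3(1)] by force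
      qed
      then show ?thesis using F_ne[OF 3(1)] 3 by (auto simp: DD_def)
    qed
  qed
  show "\<forall>x\<in>stack_verts d0 w. \<exists>C\<in>Cs1. x \<in> C"
  proof
    fix x assume "x \<in> stack_verts d0 w"
    then obtain a i where x: "x = (a,i)" "a \<le> 2" "i \<in> {1..k}" unfolding V by auto
    have vt: "(True,i) \<in> verts k" "(False,i) \<in> verts k" using x by (auto simp: verts_def)
    obtain XT where XT: "XT \<in> w" "(True,i) \<in> XT" using w_cov[OF vt(1)] by blast
    obtain XF where XF: "XF \<in> w" "(False,i) \<in> XF" using w_cov[OF vt(2)] by blast
    have XFn: "XF \<notin> tp ` F" using XF by auto
    consider "a = 0" | "a = 1" | "a = 2" using x by linarith
    then show "\<exists>C\<in>Cs1. x \<in> C"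
    proof cases
      case 1
      show ?thesis
      proof (cases "r < i")
        case True
        then have "i \<in> {r+1..k}" using x by auto
        then obtain E where "E \<in> F" "i \<in> E" using F_cov by blast
        then show ?thesis using 1 x unfolding Cs1_def by (intro bexI[of _ "UU E"]) (auto simp: UU_mem)
      next
        case False
        have "XT \<notin> tp ` F"
        proof
          assume "XT \<in> tp ` F"
          then obtain E where "E \<in> F" "XT = tp E" by auto
          then have "i \<in> E" using XT by auto
          then show False using Fsub[OF \<open>E \<in> F\<close> \<open>i \<in> E\<close>] False by auto
        qed
        then show ?thesis using 1 x XT unfolding Cs1_def by (intro bexI[of _ "cls XT"]) (auto simp: cls_mem)
      qed
    next
      case 2
      show ?thesis
      proof (cases "XT \<in> tp ` F")
        case True
        then obtain E where "E \<in> F" "XT = tp E" by auto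
        then show ?thesis using 2 x XT unfolding Cs1_def by (intro bexI[of _ "DD E"]) (auto simp: DD_mem)
      next
        case False
        then show ?thesis using 2 x XT unfolding Cs1_def by (intro bexI[of _ "cls XT"]) (auto simp: cls_mem)
      qed
    next
      case 3 then show ?thesis using x XF XFn unfolding Cs1_def by (intro bexI[of _ "cls XF"]) (auto simp: cls_mem)
    qed
  qed
  show "\<forall>C1\<in>Cs1. \<forall>C2\<in>Cs1. \<forall>x. x \<in> C1 \<longrightarrow> x \<in> C2 \<longrightarrow> C1 = C2"
  proof (intro ballI allI impI)
    fix C1 C2 x assume C: "C1 \<in> Cs1" "C2 \<in> Cs1" "x \<in> C1" "x \<in> C2"
    obtain a i where x: "x = (a,i)" by (cases x)
    have cc: "X1 \<in> w \<Longrightarrow> X2 \<in> w \<Longrightarrow> (a,i) \<in> cls X1 \<Longrightarrow> (a,i) \<in> cls X2 \<Longrightarrow> X1 = X2" for X1 X2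
      using w_disj[of X1 X2 "(True,i)"] w_disj[of X1 X2 "(False,i)"] unfolding cls_mem by auto
    have cu: "X \<in> w \<Longrightarrow> X \<notin> tp ` F \<Longrightarrow> E \<in> F \<Longrightarrow> (a,i) \<in> cls X \<Longrightarrow> (a,i) \<in> UU E \<Longrightarrow> False" for X E
      using tpF_notin[of E i X] unfolding cls_mem UU_mem by auto
    have cd: "X \<in> w \<Longrightarrow> X \<notin> tp ` F \<Longrightarrow> E \<in> F \<Longrightarrow> (a,i) \<in> cls X \<Longrightarrow> (a,i) \<in> DD E \<Longrightarrow> False" for X E
      using tpF_notin[of E i X] unfolding cls_mem DD_mem by auto
    have uu: "E1 \<in> F \<Longrightarrow> E2 \<in> F \<Longrightarrow> (a,i) \<in> UU E1 \<Longrightarrow> (a,i) \<in> UU E2 \<Longrightarrow> E1 = E2" for E1 E2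
      using F_disj[of E1 E2 i] unfolding UU_mem by auto
    have dd: "E1 \<in> F \<Longrightarrow> E2 \<in> F \<Longrightarrow> (a,i) \<in> DD E1 \<Longrightarrow> (a,i) \<in> DD E2 \<Longrightarrow> E1 = E2" for E1 E2
      using F_disj[of E1 E2 i] unfolding DD_mem by auto
    have ud: "(a,i) \<in> UU E1 \<Longrightarrow> (a,i) \<in> DD E2 \<Longrightarrow> False" for E1 E2
      unfolding UU_mem DD_mem by auto
    from C(1) consider X where "X \<in> w" "X \<notin> tp ` F" "C1 = cls X" | E where "E \<in> F" "C1 = UU E" | E where "E \<in> F" "C1 = DD E"
      unfolding Cs1_def by blast
    note c1 = this
    from C(2) consider X where "X \<in> w" "X \<notin> tp ` F" "C2 = cls X" | E where "E \<in> F" "C2 = UU E" | E where "E \<in> F" "C2 = DD E"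
      unfolding Cs1_def by blast
    note c2 = this
    show "C1 = C2"
      apply (rule c1; rule c2)
      using C(3,4) x cc cu cd uu dd ud by metis+
  qed
  show "\<forall>x y. (x,y) \<in> stack_rel d0 w \<longrightarrow> (\<exists>C\<in>Cs1. x \<in> C \<and> y \<in> C)"
  proof (intro allI impI)
    fix x y assume "(x,y) \<in> stack_rel d0 w"
    then consider B where "B \<in> d0" "x \<in> up3 ` B" "y \<in> up3 ` B" | B where "B \<in> w" "x \<in> dn3 ` B" "y \<in> dn3 ` B"
      unfolding stack_rel_def by blast
    then show "\<exists>C\<in>Cs1. x \<in> C \<and> y \<in> C"
    proof cases
      case 1
      from d0_kinds[OF 1(1)] show ?thesis
      proof (elim disjE bexE)
        fix i assume i: "i \<in> {1..r}" "B = {(True,i),(False,i)}"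
        have "(True,i) \<in> verts k" using i rk by (auto simp: verts_def)
        then obtain X where X: "X \<in> w" "(True,i) \<in> X" using w_cov by blast
        have "X \<notin> tp ` F" using X i notin_tpF by auto
        moreover have "up3 ` B \<subseteq> cls X" using i X by (auto simp: cls_mem)
        moreover have "cls X \<in> Cs1" using X \<open>X \<notin> tp ` F\<close> unfolding Cs1_def by blast
        ultimately show ?thesis using 1 by blast
      next
        fix E assume E: "E \<in> F" "B = tp E"
        have "UU E \<in> Cs1" using E unfolding Cs1_def by blast
        moreover have "x \<in> UU E" "y \<in> UU E" using 1 E unfolding UU_def up3_tp by auto
        ultimately show ?thesis by blast
      next
        fix E assume E: "E \<in> F" "B = bt E"
        have "DD E \<in> Cs1" using E unfolding Cs1_def by blast
        moreover have "x \<in> DD E" "y \<in> DD E" using 1 E unfolding DD_def up3_bt by auto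
        ultimately show ?thesis by blast
      qed
    next
      case 2
      show ?thesis
      proof (cases "B \<in> tp ` F")
        case True
        then obtain E where E: "E \<in> F" "B = tp E" by auto
        have "DD E \<in> Cs1" using E unfolding Cs1_def by blast
        moreover have "x \<in> DD E" "y \<in> DD E" using 2 E unfolding DD_def dn3_tp by auto
        ultimately show ?thesis by blast
      next
        case False
        have "cls B \<in> Cs1" using False 2 unfolding Cs1_def by blast
        moreover have "x \<in> cls B" "y \<in> cls B" using 2 unfolding cls_def by auto
        ultimately show ?thesis by blast
      qed
    qed
  qed
  show "\<forall>C\<in>Cs1. \<forall>x\<in>C. \<forall>y\<in>C. (x,y) \<in> (stack_rel d0 w)\<^sup>*"
  proof
    fix C assume "C \<in> Cs1"
    then consider X where "X \<in> w" "X \<notin> tp ` F" "C = cls X" | E where "E \<in> F" "C = UU E" | E where "E \<in> F" "C = DD E"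
      unfolding Cs1_def by blast
    then show "\<forall>x\<in>C. \<forall>y\<in>C. (x,y) \<in> (stack_rel d0 w)\<^sup>*"
    proof cases
      case 1
      obtain v0 where v0: "v0 \<in> X" using w_sub 1 by blast
      have hub: "z \<in> C \<Longrightarrow> (dn3 v0, z) \<in> (stack_rel d0 w)\<^sup>*" for z
      proof -
        assume "z \<in> C"
        then consider v where "v \<in> X" "z = dn3 v" | i where "(True,i) \<in> X" "z = (0,i)"
          using 1 unfolding cls_def by blast
        then show ?thesis
        proof cases
          case 1
          then show ?thesis using relI2[of X w "dn3 v0" z d0] v0 \<open>X \<in> w\<close> by blast
        next
          case (2 i)
          have e1: "(dn3 v0, (1,i)) \<in> stack_rel d0 w"
            using relI2[of X w "dn3 v0" "(1,i)" d0] v0 \<open>X \<in> w\<close> 2 by (auto simp: dn3_mem)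
          have "i \<in> {1..r}" using nF_top 1 2 by blast
          then have e2: "((1,i), (0,i)) \<in> stack_rel d0 w"
            using relI1[OF d0_id, of i "(1,i)" "(0,i)"] by (auto simp: up3_mem)
          show ?thesis using e1 e2 2 by (meson converse_rtrancl_into_rtrancl r_into_rtrancl)
        qed
      qed
      show ?thesis
      proof (intro ballI)
        fix x y assume "x \<in> C" "y \<in> C"
        then show "(x,y) \<in> (stack_rel d0 w)\<^sup>*" using hub rtr_sym by (meson rtrancl_trans)
      qed
    next
      case 2
      then show ?thesis using relI1[OF d0_tp[OF 2(1)], of _ _ w] unfolding up3_tp UU_def by blast
    next
      case 3
      then show ?thesis using relI2[OF tpF[OF 3(1)], of _ _ d0] unfolding dn3_tp DD_def by blast
    qed
  qed
qed

lemma back3_cls: "back3 ` (cls X \<inter> {v. fst v \<noteq> 1}) = X"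
proof (rule set_eqI, rule iffI)
  fix v assume "v \<in> back3 ` (cls X \<inter> {v. fst v \<noteq> 1})"
  then obtain a i where "(a,i) \<in> cls X" "a \<noteq> 1" "v = back3 (a,i)" by auto
  then show "v \<in> X" unfolding cls_mem by auto
next
  fix v assume v: "v \<in> X"
  obtain t i where vt: "v = (t,i)" by (cases v)
  show "v \<in> back3 ` (cls X \<inter> {v. fst v \<noteq> 1})"
  proof (cases t)
    case True
    then have "(0,i) \<in> cls X \<inter> {v. fst v \<noteq> 1}" using v vt by (simp add: cls_mem)
    then show ?thesis using vt True by (intro image_eqI[of _ _ "(0,i)"]) auto
  next
    case False
    then have "(2,i) \<in> cls X \<inter> {v. fst v \<noteq> 1}" using v vt by (simp add: cls_mem)
    then show ?thesis using vt False by (intro image_eqI[of _ _ "(2,i)"]) auto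
  qed
qed

lemma back3_UU: "back3 ` (UU E \<inter> {v. fst v \<noteq> 1}) = tp E"
proof (rule set_eqI, rule iffI)
  fix v assume "v \<in> back3 ` (UU E \<inter> {v. fst v \<noteq> 1})"
  then show "v \<in> tp E" by (auto simp: UU_def)
next
  fix v assume "v \<in> tp E"
  then obtain i where "i \<in> E" "v = (True,i)" by (auto simp: tp_def)
  then show "v \<in> back3 ` (UU E \<inter> {v. fst v \<noteq> 1})" by (intro image_eqI[of _ _ "(0,i)"]) (auto simp: UU_def)
qed

lemma DD_mid: "DD E \<inter> {v. fst v \<noteq> 1} = {}" by (auto simp: DD_def)

lemma comp_d0_w: "comp_diag d0 w = w"
proof -
  have "comp_diag d0 w = {back3 ` (C \<inter> {v. fst v \<noteq> 1}) | C. C \<in> Cs1 \<and> C \<inter> {v. fst v \<noteq> 1} \<noteq> {}}"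
    unfolding comp_diag_def comp1 ..
  also have "\<dots> = w"
  proof (rule set_eqI, rule iffI)
    fix X assume "X \<in> {back3 ` (C \<inter> {v. fst v \<noteq> 1}) | C. C \<in> Cs1 \<and> C \<inter> {v. fst v \<noteq> 1} \<noteq> {}}"
    then obtain C where C: "C \<in> Cs1" "C \<inter> {v. fst v \<noteq> 1} \<noteq> {}" "X = back3 ` (C \<inter> {v. fst v \<noteq> 1})" by blast
    from C(1) consider Y where "Y \<in> w" "Y \<notin> tp ` F" "C = cls Y" | E where "E \<in> F" "C = UU E" | E where "E \<in> F" "C = DD E"
      unfolding Cs1_def by blast
    then show "X \<in> w"
    proof cases
      case 1 then show ?thesis using C back3_cls by simp
    next
      case 2 then show ?thesis using C back3_UU tpF by simp
    next
      case 3 then show ?thesis using C DD_mid by simp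
    qed
  next
    fix X assume X: "X \<in> w"
    show "X \<in> {back3 ` (C \<inter> {v. fst v \<noteq> 1}) | C. C \<in> Cs1 \<and> C \<inter> {v. fst v \<noteq> 1} \<noteq> {}}"
    proof (cases "X \<in> tp ` F")
      case True
      then obtain E where E: "E \<in> F" "X = tp E" by auto
      have "UU E \<in> Cs1" using E unfolding Cs1_def by blast
      moreover have "UU E \<inter> {v. fst v \<noteq> 1} \<noteq> {}" using F_ne[OF E(1)] by (auto simp: UU_def)
      ultimately show ?thesis using back3_UU E by blast
    next
      case False
      have "cls X \<in> Cs1" using X False unfolding Cs1_def by blast
      moreover have "cls X \<inter> {v. fst v \<noteq> 1} \<noteq> {}" using back3_cls[of X] w_sub[OF X] by auto
      ultimately show ?thesis using back3_cls[of X] by blast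
    qed
  qed
  finally show ?thesis .
qed

lemma ell_d0_w: "ell d0 w = card F"
proof -
  have "{C \<in> components d0 w. C \<subseteq> {v. fst v = 1}} = DD ` F"
  proof (rule set_eqI, rule iffI)
    fix C assume "C \<in> {C \<in> components d0 w. C \<subseteq> {v. fst v = 1}}"
    then have C: "C \<in> Cs1" "C \<subseteq> {v. fst v = 1}" using comp1 by auto
    from C(1) consider Y where "Y \<in> w" "Y \<notin> tp ` F" "C = cls Y" | E where "E \<in> F" "C = UU E" | E where "E \<in> F" "C = DD E"
      unfolding Cs1_def by blast
    then show "C \<in> DD ` F"
    proof cases
      case 1
      have "cls Y \<inter> {v. fst v \<noteq> 1} \<noteq> {}" using back3_cls[of Y] w_sub[OF 1(1)] by auto
      then show ?thesis using C 1 by auto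
    next
      case 2
      then show ?thesis using C F_ne[OF 2(1)] by (auto simp: UU_def)
    qed auto
  next
    fix C assume "C \<in> DD ` F"
    then show "C \<in> {C \<in> components d0 w. C \<subseteq> {v. fst v = 1}}"
      unfolding comp1 Cs1_def by (auto simp: DD_def)
  qed
  moreover have "inj_on DD F"
  proof (rule inj_onI)
    fix E1 E2 assume "E1 \<in> F" "E2 \<in> F" "DD E1 = DD E2"
    then show "E1 = E2" unfolding DD_def by (auto simp: set_eq_iff)
  qed
  ultimately show ?thesis unfolding ell_def by (simp add: card_image)
qed

end

context cs begin

definition cls2 :: "vtx set \<Rightarrow> (nat \<times> nat) set" where
  "cls2 X = up3 ` X \<union> {(2,i) | i. (False,i) \<in> X}"
definition UU2 :: "nat set \<Rightarrow> (nat \<times> nat) set" where "UU2 E = {(1,i) | i. i \<in> E}"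
definition DD2 :: "nat set \<Rightarrow> (nat \<times> nat) set" where "DD2 E = {(2,i) | i. i \<in> E}"
definition "Cs2 = cls2 ` (w - bt ` F) \<union> UU2 ` F \<union> DD2 ` F"

lemma cls2_mem: "(a,i) \<in> cls2 X \<longleftrightarrow> (a = 0 \<and> (True,i) \<in> X) \<or> ((a = 1 \<or> a = 2) \<and> (False,i) \<in> X)"
  unfolding cls2_def Un_iff up3_mem by auto

lemma UU2_mem: "(a,i) \<in> UU2 E \<longleftrightarrow> a = 1 \<and> i \<in> E" unfolding UU2_def by auto
lemma DD2_mem: "(a,i) \<in> DD2 E \<longleftrightarrow> a = 2 \<and> i \<in> E" unfolding DD2_def by auto

lemma nF_bot: "X \<in> w \<Longrightarrow> X \<notin> bt ` F \<Longrightarrow> (False,i) \<in> X \<Longrightarrow> i \<in> {1..r}"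
proof -
  assume X: "X \<in> w" "X \<notin> bt ` F" "(False,i) \<in> X"
  have "i \<ge> 1" using ver[OF X(1) X(3)] by simp
  moreover have "\<not> r < i" using key_bot[OF X(1) X(3)] X(2) by auto
  ultimately show ?thesis by auto
qed

lemma btF_notin: "E \<in> F \<Longrightarrow> i \<in> E \<Longrightarrow> X \<in> w \<Longrightarrow> (False,i) \<in> X \<Longrightarrow> X = bt E"
  using w_disj[OF _ btF, of X E "(False,i)"] by auto

lemma notin_btF: "(False,i) \<in> X \<Longrightarrow> i \<le> r \<Longrightarrow> X \<notin> bt ` F"
proof
  assume h: "(False,i) \<in> X" "i \<le> r" "X \<in> bt ` F"
  then obtain E where "E \<in> F" "X = bt E" by auto
  then have "i \<in> E" using h by auto
  then show False using Fsub[OF \<open>E \<in> F\<close> \<open>i \<in> E\<close>] h by auto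
qed

lemma comp2: "components w d0 = Cs2"
proof (rule comps_char)
  have V: "stack_verts w d0 = {(a,i). a \<le> (2::nat) \<and> i \<in> {1..k}}" by (rule stack_verts_full[OF wpon d0pon])
  show "\<forall>C\<in>Cs2. C \<subseteq> stack_verts w d0 \<and> C \<noteq> {}"
  proof
    fix C assume "C \<in> Cs2"
    then consider X where "X \<in> w" "X \<notin> bt ` F" "C = cls2 X" | E where "E \<in> F" "C = UU2 E" | E where "E \<in> F" "C = DD2 E"
      unfolding Cs2_def by blast
    then show "C \<subseteq> stack_verts w d0 \<and> C \<noteq> {}"
    proof cases
      case 1
      have "C \<subseteq> stack_verts w d0" unfolding V
      proof
        fix x assume "x \<in> C"
        moreover obtain a i where "x = (a,i)" by (cases x)
        ultimately show "x \<in> {(a,i). a \<le> (2::nat) \<and> i \<in> {1..k}}" using 1 cls2_mem ver by auto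
      qed
      moreover obtain v where "v \<in> X" using w_sub 1 by blast
      then have "up3 v \<in> C" using 1 by (auto simp: cls2_def)
      ultimately show ?thesis by auto
    next
      case 2
      have "C \<subseteq> stack_verts w d0" unfolding V
      proof
        fix x assume "x \<in> C"
        then obtain i where "x = (1,i)" "i \<in> E" using 2 by (auto simp: UU2_def)
        then show "x \<in> {(a,i). a \<le> (2::nat) \<and> i \<in> {1..k}}" using Fsub[OF 2(1)] by force
      qed
      then show ?thesis using F_ne[OF 2(1)] 2 by (auto simp: UU2_def)
    next
      case 3
      have "C \<subseteq> stack_verts w d0" unfolding V
      proof
        fix x assume "x \<in> C"
        then obtain i where "x = (2,i)" "i \<in> E" using 3 by (auto simp: DD2_def)
        then show "x \<in> {(a,i). a \<le> (2::nat) \<and> i \<in> {1..k}}" using Fsub[OF 3(1)] by force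
      qed
      then show ?thesis using F_ne[OF 3(1)] 3 by (auto simp: DD2_def)
    qed
  qed
  show "\<forall>x\<in>stack_verts w d0. \<exists>C\<in>Cs2. x \<in> C"
  proof
    fix x assume "x \<in> stack_verts w d0"
    then obtain a i where x: "x = (a,i)" "a \<le> 2" "i \<in> {1..k}" unfolding V by auto
    have vt: "(True,i) \<in> verts k" "(False,i) \<in> verts k" using x by (auto simp: verts_def)
    obtain XT where XT: "XT \<in> w" "(True,i) \<in> XT" using w_cov[OF vt(1)] by blast
    obtain XF where XF: "XF \<in> w" "(False,i) \<in> XF" using w_cov[OF vt(2)] by blast
    have XTn: "XT \<notin> bt ` F" using XT by auto
    consider "a = 0" | "a = 1" | "a = 2" using x by linarith
    then show "\<exists>C\<in>Cs2. x \<in> C"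
    proof cases
      case 1 then show ?thesis using x XT XTn unfolding Cs2_def by (intro bexI[of _ "cls2 XT"]) (auto simp: cls2_mem)
    next
      case 2
      show ?thesis
      proof (cases "XF \<in> bt ` F")
        case True
        then obtain E where "E \<in> F" "XF = bt E" by auto
        then show ?thesis using 2 x XF unfolding Cs2_def by (intro bexI[of _ "UU2 E"]) (auto simp: UU2_mem)
      next
        case False
        then show ?thesis using 2 x XF unfolding Cs2_def by (intro bexI[of _ "cls2 XF"]) (auto simp: cls2_mem)
      qed
    next
      case 3
      show ?thesis
      proof (cases "r < i")
        case True
        then have "i \<in> {r+1..k}" using x by auto
        then obtain E where "E \<in> F" "i \<in> E" using F_cov by blast
        then show ?thesis using 3 x unfolding Cs2_def by (intro bexI[of _ "DD2 E"]) (auto simp: DD2_mem)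
      next
        case False
        then have "XF \<notin> bt ` F" using XF notin_btF by auto
        then show ?thesis using 3 x XF unfolding Cs2_def by (intro bexI[of _ "cls2 XF"]) (auto simp: cls2_mem)
      qed
    qed
  qed
  show "\<forall>C1\<in>Cs2. \<forall>C2\<in>Cs2. \<forall>x. x \<in> C1 \<longrightarrow> x \<in> C2 \<longrightarrow> C1 = C2"
  proof (intro ballI allI impI)
    fix C1 C2 x assume C: "C1 \<in> Cs2" "C2 \<in> Cs2" "x \<in> C1" "x \<in> C2"
    obtain a i where x: "x = (a,i)" by (cases x)
    have cc: "X1 \<in> w \<Longrightarrow> X2 \<in> w \<Longrightarrow> (a,i) \<in> cls2 X1 \<Longrightarrow> (a,i) \<in> cls2 X2 \<Longrightarrow> X1 = X2" for X1 X2
      using w_disj[of X1 X2 "(True,i)"] w_disj[of X1 X2 "(False,i)"] unfolding cls2_mem by auto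
    have cu: "X \<in> w \<Longrightarrow> X \<notin> bt ` F \<Longrightarrow> E \<in> F \<Longrightarrow> (a,i) \<in> cls2 X \<Longrightarrow> (a,i) \<in> UU2 E \<Longrightarrow> False" for X E
      using btF_notin[of E i X] unfolding cls2_mem UU2_mem by auto
    have cd: "X \<in> w \<Longrightarrow> X \<notin> bt ` F \<Longrightarrow> E \<in> F \<Longrightarrow> (a,i) \<in> cls2 X \<Longrightarrow> (a,i) \<in> DD2 E \<Longrightarrow> False" for X E
      using btF_notin[of E i X] unfolding cls2_mem DD2_mem by auto
    have uu: "E1 \<in> F \<Longrightarrow> E2 \<in> F \<Longrightarrow> (a,i) \<in> UU2 E1 \<Longrightarrow> (a,i) \<in> UU2 E2 \<Longrightarrow> E1 = E2" for E1 E2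
      using F_disj[of E1 E2 i] unfolding UU2_mem by auto
    have dd: "E1 \<in> F \<Longrightarrow> E2 \<in> F \<Longrightarrow> (a,i) \<in> DD2 E1 \<Longrightarrow> (a,i) \<in> DD2 E2 \<Longrightarrow> E1 = E2" for E1 E2
      using F_disj[of E1 E2 i] unfolding DD2_mem by auto
    have ud: "(a,i) \<in> UU2 E1 \<Longrightarrow> (a,i) \<in> DD2 E2 \<Longrightarrow> False" for E1 E2
      unfolding UU2_mem DD2_mem by auto
    from C(1) consider X where "X \<in> w" "X \<notin> bt ` F" "C1 = cls2 X" | E where "E \<in> F" "C1 = UU2 E" | E where "E \<in> F" "C1 = DD2 E"
      unfolding Cs2_def by blast
    note c1 = this
    from C(2) consider X where "X \<in> w" "X \<notin> bt ` F" "C2 = cls2 X" | E where "E \<in> F" "C2 = UU2 E" | E where "E \<in> F" "C2 = DD2 E"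
      unfolding Cs2_def by blast
    note c2 = this
    show "C1 = C2"
      apply (rule c1; rule c2)
      using C(3,4) x cc cu cd uu dd ud by metis+
  qed
  show "\<forall>x y. (x,y) \<in> stack_rel w d0 \<longrightarrow> (\<exists>C\<in>Cs2. x \<in> C \<and> y \<in> C)"
  proof (intro allI impI)
    fix x y assume "(x,y) \<in> stack_rel w d0"
    then consider B where "B \<in> w" "x \<in> up3 ` B" "y \<in> up3 ` B" | B where "B \<in> d0" "x \<in> dn3 ` B" "y \<in> dn3 ` B"
      unfolding stack_rel_def by blast
    then show "\<exists>C\<in>Cs2. x \<in> C \<and> y \<in> C"
    proof cases
      case 1
      show ?thesis
      proof (cases "B \<in> bt ` F")
        case True
        then obtain E where E: "E \<in> F" "B = bt E" by auto
        have "UU2 E \<in> Cs2" using E unfolding Cs2_def by blast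
        moreover have "x \<in> UU2 E" "y \<in> UU2 E" using 1 E unfolding UU2_def up3_bt by auto
        ultimately show ?thesis by blast
      next
        case False
        have "cls2 B \<in> Cs2" using False 1 unfolding Cs2_def by blast
        moreover have "x \<in> cls2 B" "y \<in> cls2 B" using 1 unfolding cls2_def by auto
        ultimately show ?thesis by blast
      qed
    next
      case 2
      from d0_kinds[OF 2(1)] show ?thesis
      proof (elim disjE bexE)
        fix i assume i: "i \<in> {1..r}" "B = {(True,i),(False,i)}"
        have "(False,i) \<in> verts k" using i rk by (auto simp: verts_def)
        then obtain X where X: "X \<in> w" "(False,i) \<in> X" using w_cov by blast
        have "X \<notin> bt ` F" using X i notin_btF by auto
        moreover have "dn3 ` B \<subseteq> cls2 X" using i X by (auto simp: cls2_mem)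
        moreover have "cls2 X \<in> Cs2" using X \<open>X \<notin> bt ` F\<close> unfolding Cs2_def by blast
        ultimately show ?thesis using 2 by blast
      next
        fix E assume E: "E \<in> F" "B = tp E"
        have "UU2 E \<in> Cs2" using E unfolding Cs2_def by blast
        moreover have "x \<in> UU2 E" "y \<in> UU2 E" using 2 E unfolding UU2_def dn3_tp by auto
        ultimately show ?thesis by blast
      next
        fix E assume E: "E \<in> F" "B = bt E"
        have "DD2 E \<in> Cs2" using E unfolding Cs2_def by blast
        moreover have "x \<in> DD2 E" "y \<in> DD2 E" using 2 E unfolding DD2_def dn3_bt by auto
        ultimately show ?thesis by blast
      qed
    qed
  qed
  show "\<forall>C\<in>Cs2. \<forall>x\<in>C. \<forall>y\<in>C. (x,y) \<in> (stack_rel w d0)\<^sup>*"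
  proof
    fix C assume "C \<in> Cs2"
    then consider X where "X \<in> w" "X \<notin> bt ` F" "C = cls2 X" | E where "E \<in> F" "C = UU2 E" | E where "E \<in> F" "C = DD2 E"
      unfolding Cs2_def by blast
    then show "\<forall>x\<in>C. \<forall>y\<in>C. (x,y) \<in> (stack_rel w d0)\<^sup>*"
    proof cases
      case 1
      obtain v0 where v0: "v0 \<in> X" using w_sub 1 by blast
      have hub: "z \<in> C \<Longrightarrow> (up3 v0, z) \<in> (stack_rel w d0)\<^sup>*" for z
      proof -
        assume "z \<in> C"
        then consider v where "v \<in> X" "z = up3 v" | i where "(False,i) \<in> X" "z = (2,i)"
          using 1 unfolding cls2_def by blast
        then show ?thesis
        proof cases
          case 1
          then show ?thesis using relI1[of X w "up3 v0" z d0] v0 \<open>X \<in> w\<close> by blast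
        next
          case (2 i)
          have e1: "(up3 v0, (1,i)) \<in> stack_rel w d0"
            using relI1[of X w "up3 v0" "(1,i)" d0] v0 \<open>X \<in> w\<close> 2 by (auto simp: up3_mem)
          have "i \<in> {1..r}" using nF_bot 1 2 by blast
          then have e2: "((1,i), (2,i)) \<in> stack_rel w d0"
            using relI2[OF d0_id, of i "(1,i)" "(2,i)"] by (auto simp: dn3_mem)
          show ?thesis using e1 e2 2 by (meson converse_rtrancl_into_rtrancl r_into_rtrancl)
        qed
      qed
      show ?thesis
      proof (intro ballI)
        fix x y assume "x \<in> C" "y \<in> C"
        then show "(x,y) \<in> (stack_rel w d0)\<^sup>*" using hub rtr_sym by (meson rtrancl_trans)
      qed
    next
      case 2
      then show ?thesis using relI1[OF btF[OF 2(1)], of _ _ d0] unfolding up3_bt UU2_def by blast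
    next
      case 3
      then show ?thesis using relI2[OF d0_bt[OF 3(1)], of _ _ w] unfolding dn3_bt DD2_def by blast
    qed
  qed
qed

lemma back3_cls2: "back3 ` (cls2 X \<inter> {v. fst v \<noteq> 1}) = X"
proof (rule set_eqI, rule iffI)
  fix v assume "v \<in> back3 ` (cls2 X \<inter> {v. fst v \<noteq> 1})"
  then obtain a i where "(a,i) \<in> cls2 X" "a \<noteq> 1" "v = back3 (a,i)" by auto
  then show "v \<in> X" unfolding cls2_mem by auto
next
  fix v assume v: "v \<in> X"
  obtain t i where vt: "v = (t,i)" by (cases v)
  show "v \<in> back3 ` (cls2 X \<inter> {v. fst v \<noteq> 1})"
  proof (cases t)
    case True
    then have "(0,i) \<in> cls2 X \<inter> {v. fst v \<noteq> 1}" using v vt by (simp add: cls2_mem)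
    then show ?thesis using vt True by (intro image_eqI[of _ _ "(0,i)"]) auto
  next
    case False
    then have "(2,i) \<in> cls2 X \<inter> {v. fst v \<noteq> 1}" using v vt by (simp add: cls2_mem)
    then show ?thesis using vt False by (intro image_eqI[of _ _ "(2,i)"]) auto
  qed
qed

lemma back3_DD2: "back3 ` (DD2 E \<inter> {v. fst v \<noteq> 1}) = bt E"
proof (rule set_eqI, rule iffI)
  fix v assume "v \<in> back3 ` (DD2 E \<inter> {v. fst v \<noteq> 1})"
  then show "v \<in> bt E" by (auto simp: DD2_def)
next
  fix v assume "v \<in> bt E"
  then obtain i where "i \<in> E" "v = (False,i)" by (auto simp: bt_def)
  then show "v \<in> back3 ` (DD2 E \<inter> {v. fst v \<noteq> 1})" by (intro image_eqI[of _ _ "(2,i)"]) (auto simp: DD2_def)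
qed

lemma UU2_mid: "UU2 E \<inter> {v. fst v \<noteq> 1} = {}" by (auto simp: UU2_def)

lemma comp_w_d0: "comp_diag w d0 = w"
proof -
  have "comp_diag w d0 = {back3 ` (C \<inter> {v. fst v \<noteq> 1}) | C. C \<in> Cs2 \<and> C \<inter> {v. fst v \<noteq> 1} \<noteq> {}}"
    unfolding comp_diag_def comp2 ..
  also have "\<dots> = w"
  proof (rule set_eqI, rule iffI)
    fix X assume "X \<in> {back3 ` (C \<inter> {v. fst v \<noteq> 1}) | C. C \<in> Cs2 \<and> C \<inter> {v. fst v \<noteq> 1} \<noteq> {}}"
    then obtain C where C: "C \<in> Cs2" "C \<inter> {v. fst v \<noteq> 1} \<noteq> {}" "X = back3 ` (C \<inter> {v. fst v \<noteq> 1})" by blast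
    from C(1) consider Y where "Y \<in> w" "Y \<notin> bt ` F" "C = cls2 Y" | E where "E \<in> F" "C = UU2 E" | E where "E \<in> F" "C = DD2 E"
      unfolding Cs2_def by blast
    then show "X \<in> w"
    proof cases
      case 1 then show ?thesis using C back3_cls2 by simp
    next
      case 2 then show ?thesis using C UU2_mid by simp
    next
      case 3 then show ?thesis using C back3_DD2 btF by simp
    qed
  next
    fix X assume X: "X \<in> w"
    show "X \<in> {back3 ` (C \<inter> {v. fst v \<noteq> 1}) | C. C \<in> Cs2 \<and> C \<inter> {v. fst v \<noteq> 1} \<noteq> {}}"
    proof (cases "X \<in> bt ` F")
      case True
      then obtain E where E: "E \<in> F" "X = bt E" by auto
      have "DD2 E \<in> Cs2" using E unfolding Cs2_def by blast
      moreover have "DD2 E \<inter> {v. fst v \<noteq> 1} \<noteq> {}" using F_ne[OF E(1)] by (auto simp: DD2_def)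
      ultimately show ?thesis using back3_DD2 E by blast
    next
      case False
      have "cls2 X \<in> Cs2" using X False unfolding Cs2_def by blast
      moreover have "cls2 X \<inter> {v. fst v \<noteq> 1} \<noteq> {}" using back3_cls2[of X] w_sub[OF X] by auto
      ultimately show ?thesis using back3_cls2[of X] by blast
    qed
  qed
  finally show ?thesis .
qed

end

definition sh :: "nat \<Rightarrow> nat set \<Rightarrow> nat set" where "sh a E = (\<lambda>i. i + a) ` E"

definition efam :: "alg \<Rightarrow> nat \<Rightarrow> nat \<Rightarrow> nat set set" where
  "efam A r s = (\<lambda>i. {r + e_width A * i + 1 .. r + e_width A * i + e_width A}) ` {..<s}"

lemma ew_pos: "e_width A \<ge> 1" by (cases A) (auto simp: e_width_def)

lemma sh_int: "sh a {p..q} = {p+a..q+a}"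
  unfolding sh_def by (auto simp: image_iff)

lemma efam_sh: "efam A r s = sh r ` efam A 0 s"
  unfolding efam_def image_image sh_int by (simp add: algebra_simps)

lemma efam_Suc0: "efam A 0 (Suc s) = insert {1..e_width A} (sh (e_width A) ` efam A 0 s)"
  unfolding efam_def lessThan_Suc_eq_insert_0 image_insert image_image sh_int
  by (simp add: algebra_simps image_image)

lemma juxt_tp: "(\<lambda>B. (\<lambda>(b,i). (b, i + a)) ` B) (tp E) = tp (sh a E)"
  by (auto simp: tp_def sh_def image_image)
lemma juxt_bt: "(\<lambda>B. (\<lambda>(b,i). (b, i + a)) ` B) (bt E) = bt (sh a E)"
  by (auto simp: bt_def sh_def image_image)

lemma e_diag_eq: "e_diag A = {tp {1..e_width A}, bt {1..e_width A}}"
proof (cases A)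
  case TL
  have "{1..2::nat} = {1,2}" by auto
  then show ?thesis using TL by (auto simp: e_diag_def e_width_def tp_def bt_def)
qed (auto simp: e_diag_def e_width_def tp_def bt_def)

lemma e_pow_eq: "e_pow_diag A s = tp ` efam A 0 s \<union> bt ` efam A 0 s"
proof (induction s)
  case 0
  then show ?case by (simp add: efam_def)
next
  case (Suc s)
  have "e_pow_diag A (Suc s) = e_diag A \<union> (\<lambda>B. (\<lambda>(b,i). (b, i + e_width A)) ` B) ` e_pow_diag A s"
    by (simp add: juxt_def)
  also have "\<dots> = {tp {1..e_width A}, bt {1..e_width A}} \<union> (tp ` sh (e_width A) ` efam A 0 s \<union> bt ` sh (e_width A) ` efam A 0 s)"
    unfolding Suc e_diag_eq image_Un image_image juxt_tp juxt_bt ..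
  also have "\<dots> = tp ` efam A 0 (Suc s) \<union> bt ` efam A 0 (Suc s)"
    unfolding efam_Suc0 by auto
  finally show ?case .
qed

lemma sng_tpbt: "(\<lambda>B. tp B \<union> bt B) ` sng r = id_diag r"
  unfolding sng_def id_diag_def by (auto simp: tp_def bt_def)

lemma efam_props:
  assumes "E \<in> efam A r s"
  shows "E \<subseteq> {r+1..r + e_width A * s}" "E \<noteq> {}" "card E = e_width A"
    "\<And>a b c. a \<in> E \<Longrightarrow> c \<in> E \<Longrightarrow> a \<le> b \<Longrightarrow> b \<le> c \<Longrightarrow> b \<in> E"
proof -
  obtain i where i: "i < s" "E = {r + e_width A * i + 1 .. r + e_width A * i + e_width A}"
    using assms unfolding efam_def by auto
  have "e_width A * i + e_width A \<le> e_width A * s"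
    using i(1) by (metis Suc_leI mult_Suc_right mult_le_mono2 add.commute)
  then show "E \<subseteq> {r+1..r + e_width A * s}" using i by auto
  show "E \<noteq> {}" using i ew_pos[of A] by auto
  show "card E = e_width A" using i by simp
  show "\<And>a b c. a \<in> E \<Longrightarrow> c \<in> E \<Longrightarrow> a \<le> b \<Longrightarrow> b \<le> c \<Longrightarrow> b \<in> E" using i by auto
qed

lemma efam_disj:
  assumes "E1 \<in> efam A r s" "E2 \<in> efam A r s" "x \<in> E1" "x \<in> E2"
  shows "E1 = E2"
proof -
  let ?W = "e_width A"
  obtain i where i: "E1 = {r + ?W * i + 1 .. r + ?W * i + ?W}" using assms unfolding efam_def by auto
  obtain j where j: "E2 = {r + ?W * j + 1 .. r + ?W * j + ?W}" using assms unfolding efam_def by auto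
  have "i = j"
  proof (rule ccontr)
    assume "i \<noteq> j"
    then consider "i < j" | "j < i" by linarith
    then show False
    proof cases
      case 1 then have "?W * i + ?W \<le> ?W * j" by (metis Suc_leI mult_Suc_right mult_le_mono2 add.commute)
      then show False using assms(3,4) i j by auto
    next
      case 2 then have "?W * j + ?W \<le> ?W * i" by (metis Suc_leI mult_Suc_right mult_le_mono2 add.commute)
      then show False using assms(3,4) i j by auto
    qed
  qed
  then show ?thesis using i j by simp
qed

lemma efam_cov:
  assumes "x \<in> {r+1..r + e_width A * s}"
  shows "\<exists>E\<in>efam A r s. x \<in> E"
proof -
  let ?W = "e_width A"
  have W: "?W \<ge> 1" by (rule ew_pos)
  define i where "i = (x - r - 1) div ?W"
  have e: "x - r - 1 = ?W * i + (x - r - 1) mod ?W" unfolding i_def by simp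
  have m: "(x - r - 1) mod ?W < ?W" using W by simp
  have d: "?W * i \<le> x - r - 1" "x - r - 1 < ?W * i + ?W" using e m by linarith+
  have "x - r - 1 < ?W * s" using assms W by auto
  then have "i < s" unfolding i_def using W by (simp add: div_less_iff_less_mult mult.commute)
  moreover have "x \<in> {r + ?W * i + 1 .. r + ?W * i + ?W}" using d assms by auto
  ultimately show ?thesis unfolding efam_def by blast
qed

lemma sz_ew: "sz A (e_width A)" by (cases A) (auto simp: sz_def e_width_def)

lemma tp_tpbt_eq[simp]: "tp B2 = tp B1 \<union> bt B1 \<longleftrightarrow> B1 = {} \<and> B2 = {}"
  using tpbt_tp_eq by metis
lemma bt_tpbt_eq[simp]: "bt B2 = tp B1 \<union> bt B1 \<longleftrightarrow> B1 = {} \<and> B2 = {}"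
  using tpbt_bt_eq by metis
lemma bt_tp_eq[simp]: "bt B2 = tp B1 \<longleftrightarrow> B1 = {} \<and> B2 = {}"
  using tp_bt_eq by metis

lemma transp_tp: "transp_diag {tp B} = {bt B}" and transp_bt: "transp_diag {bt B} = {tp B}"
  by (auto simp: transp_diag_def tp_def bt_def image_image)

lemma transp_mk: "transp_diag (mk P S) = mk P S"
proof -
  have f0: "(\<lambda>B. (\<lambda>(b,i). (\<not> b, i)) ` B) (tp B) = bt B" "(\<lambda>B. (\<lambda>(b,i). (\<not> b, i)) ` B) (bt B) = tp B" for B
    by (auto simp: tp_def bt_def image_image)
  have f: "(\<lambda>B. (\<lambda>(b,i). (\<not> b, i)) ` B) (tp B) = bt B" "(\<lambda>B. (\<lambda>(b,i). (\<not> b, i)) ` B) (bt B) = tp B"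
    "(\<lambda>B. (\<lambda>(b,i). (\<not> b, i)) ` B) (tp B \<union> bt B) = tp B \<union> bt B" for B
    using f0[of B] by (auto simp only: image_Un)
  show ?thesis unfolding transp_diag_def mk_def image_Un image_image f by auto
qed

lemma nprop_mk:
  assumes p: "partition_on A P" and S: "S \<subseteq> P"
  shows "nprop (mk P S) = card S"
proof -
  have ne: "B \<in> P \<Longrightarrow> B \<noteq> {}" for B using p unfolding partition_on_def by blast
  have "{X \<in> mk P S. (\<exists>i. (True,i) \<in> X) \<and> (\<exists>i. (False,i) \<in> X)} = (\<lambda>B. tp B \<union> bt B) ` S"
  proof (rule set_eqI, rule iffI)
    fix X assume X: "X \<in> {X \<in> mk P S. (\<exists>i. (True,i) \<in> X) \<and> (\<exists>i. (False,i) \<in> X)}"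
    then consider B where "B \<in> S" "X = tp B \<union> bt B" | B where "B \<in> P - S" "X = tp B"
        | B where "B \<in> P - S" "X = bt B" unfolding mk_mem by blast
    then show "X \<in> (\<lambda>B. tp B \<union> bt B) ` S" using X by cases auto
  next
    fix X assume "X \<in> (\<lambda>B. tp B \<union> bt B) ` S"
    then obtain B where B: "B \<in> S" "X = tp B \<union> bt B" by auto
    then obtain i where "i \<in> B" using ne S by blast
    then show "X \<in> {X \<in> mk P S. (\<exists>i. (True,i) \<in> X) \<and> (\<exists>i. (False,i) \<in> X)}"
      using B by (auto simp: mk_mem)
  qed
  moreover have "inj_on (\<lambda>B. tp B \<union> bt B) S" by (rule inj_onI) simp
  ultimately show ?thesis unfolding nprop_def by (simp add: card_image)
qed

lemma mk_inj:
  assumes p1: "partition_on A1 P1" and S1: "S1 \<subseteq> P1" and p2: "partition_on A2 P2" and S2: "S2 \<subseteq> P2"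
    and eq: "mk P1 S1 = mk P2 S2"
  shows "P1 = P2 \<and> S1 = S2"
proof -
  have recS: "partition_on A P \<Longrightarrow> S \<subseteq> P \<Longrightarrow> S = {B. B \<noteq> {} \<and> tp B \<union> bt B \<in> mk P S}" for A P S
  proof -
    assume p: "partition_on A P" "S \<subseteq> P"
    then have ne: "B \<in> P \<Longrightarrow> B \<noteq> {}" for B unfolding partition_on_def by blast
    show ?thesis using p ne by (auto simp: mk_mem)
  qed
  have recP: "partition_on A P \<Longrightarrow> S \<subseteq> P \<Longrightarrow> P = {B. B \<noteq> {} \<and> (tp B \<in> mk P S \<or> tp B \<union> bt B \<in> mk P S)}" for A P S
  proof -
    assume p: "partition_on A P" "S \<subseteq> P"
    then have ne: "B \<in> P \<Longrightarrow> B \<noteq> {}" for B unfolding partition_on_def by blast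
    show ?thesis using p ne by (auto simp: mk_mem)
  qed
  show ?thesis using recS[OF p1 S1] recS[OF p2 S2] recP[OF p1 S1] recP[OF p2 S2] eq by metis
qed

lemma tp_in_mk: "partition_on A P \<Longrightarrow> S \<subseteq> P \<Longrightarrow> E \<noteq> {} \<Longrightarrow> tp E \<in> mk P S \<Longrightarrow> E \<in> P - S"
  by (auto simp: mk_mem)

lemma convex_noncross:
  assumes disj: "\<forall>B1\<in>P. \<forall>B2\<in>P. \<forall>x. x \<in> B1 \<longrightarrow> x \<in> B2 \<longrightarrow> B1 = B2"
    and cv: "\<forall>B\<in>P. \<forall>a\<in>B. \<forall>c\<in>B. \<forall>b. a \<le> b \<and> b \<le> c \<longrightarrow> b \<in> B"
  shows "noncross P"
proof (rule noncrossI)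
  fix B1 B2 a b c e assume h: "B1\<in>P" "B2\<in>P" "B1\<noteq>B2" "a\<in>B1" "c\<in>B1" "b\<in>B2" "e\<in>B2" "a<b" "b<c" "c<e"
  then have "b \<in> B1" using cv by (meson less_imp_le)
  then show False using disj h by blast
qed

lemma efam_gt: "E \<in> efam A r s \<Longrightarrow> i \<in> E \<Longrightarrow> r < i \<and> i \<le> r + e_width A * s"
  using efam_props(1)[of E A r s] by auto

lemma good_ext:
  assumes g: "good A r Q S"
  shows "good A (r + e_width A * s) (Q \<union> efam A r s) S"
proof -
  let ?F = "efam A r s"
  let ?k = "r + e_width A * s"
  have qb: "B \<in> Q \<Longrightarrow> B \<subseteq> {1..r} \<and> B \<noteq> {}" for B using good_blk[OF g] by blast
  have SQ: "S \<subseteq> Q" using g by (simp add: good_def)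
  have pon: "partition_on {1..?k} (Q \<union> ?F)"
    unfolding pon_iff
  proof (intro conjI ballI allI impI)
    fix B assume B: "B \<in> Q \<union> ?F"
    show "B \<noteq> {}" "B \<subseteq> {1..?k}"
    proof -
      show "B \<noteq> {}" using B qb efam_props(2)[of B A r s] by blast
      show "B \<subseteq> {1..?k}"
      proof (cases "B \<in> Q")
        case True then show ?thesis using qb by fastforce
      next
        case False then have "B \<in> ?F" using B by auto
        then show ?thesis using efam_props(1)[of B A r s] by auto
      qed
    qed
  next
    fix x assume x: "x \<in> {1..?k}"
    show "\<exists>B\<in>Q \<union> ?F. x \<in> B"
    proof (cases "x \<le> r")
      case True then show ?thesis using good_cov[OF g, of x] x by auto
    next
      case False then have "x \<in> {r+1..?k}" using x by auto
      then show ?thesis using efam_cov by blast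
    qed
  next
    fix B1 B2 x assume h: "B1 \<in> Q \<union> ?F" "B2 \<in> Q \<union> ?F" "x \<in> B1" "x \<in> B2"
    show "B1 = B2"
    proof (cases "B1 \<in> Q")
      case True
      then have "x \<le> r" using qb[OF True] h(3) by auto
      then have "B2 \<in> Q" using h(2,4) efam_gt[of B2 A r s x] by auto
      then show ?thesis using good_disj[OF g True _ h(3) h(4)] by simp
    next
      case False
      then have "B1 \<in> ?F" using h by auto
      then have "r < x" using efam_gt h(3) by blast
      then have "B2 \<in> ?F" using h(2,4) qb by fastforce
      then show ?thesis using efam_disj[OF \<open>B1 \<in> ?F\<close> _ h(3) h(4)] by simp
    qed
  qed
  have szs: "\<forall>B\<in>(Q \<union> ?F) - S. sz A (card B)"
  proof
    fix B assume B: "B \<in> (Q \<union> ?F) - S"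
    show "sz A (card B)"
    proof (cases "B \<in> Q")
      case True then show ?thesis using B g by (auto simp: good_def)
    next
      case False then have "B \<in> ?F" using B by auto
      then show ?thesis using efam_props(3)[of B A r s] sz_ew by simp
    qed
  qed
  have nc: "noncross (Q \<union> ?F)"
  proof (rule noncrossI)
    fix B1 B2 a b c e assume h: "B1\<in>Q \<union> ?F" "B2\<in>Q \<union> ?F" "B1\<noteq>B2" "a\<in>B1" "c\<in>B1" "b\<in>B2" "e\<in>B2" "a<b" "b<c" "c<e"
    show False
    proof (cases "B1 \<in> Q")
      case q1: True
      then have "c \<le> r" using qb[OF q1] h(5) by auto
      show ?thesis
      proof (cases "B2 \<in> Q")
        case True
        then show ?thesis using noncrossD[OF _ q1 True h(3-10)] g by (auto simp: good_def)
      next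
        case False
        then have "B2 \<in> ?F" using h by auto
        then show ?thesis using efam_gt[OF \<open>B2 \<in> ?F\<close> h(6)] \<open>c \<le> r\<close> h(9) by auto
      qed
    next
      case False
      then have f1: "B1 \<in> ?F" using h by auto
      then have "r < a" using efam_gt h(4) by blast
      show ?thesis
      proof (cases "B2 \<in> Q")
        case True
        then show ?thesis using qb[OF True] h(6) \<open>r < a\<close> h(8) by fastforce
      next
        case False
        then have f2: "B2 \<in> ?F" using h by auto
        have "b \<in> B1" using efam_props(4)[OF f1 h(4) h(5)] h(8,9) by simp
        then show ?thesis using efam_disj[OF f1 f2 _ h(6)] h(3) by blast
      qed
    qed
  qed
  have ne: "noencl (Q \<union> ?F) S"
  proof (rule noenclI)
    fix B j a c assume h: "B \<in> Q \<union> ?F" "B \<notin> S" "{j} \<in> S" "a \<in> B" "c \<in> B" "a < j" "j < c"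
    have "j \<le> r" using qb[of "{j}"] h(3) SQ by auto
    show False
    proof (cases "B \<in> Q")
      case True then show ?thesis using noenclD[OF _ True h(2-7)] g by (auto simp: good_def)
    next
      case False then have "B \<in> ?F" using h by auto
      then show ?thesis using efam_gt[OF \<open>B \<in> ?F\<close> h(4)] \<open>j \<le> r\<close> h(6) by auto
    qed
  qed
  show ?thesis using pon SQ szs nc ne g unfolding good_def by auto
qed

lemma good_sng: "good A r (sng r) (sng r)"
proof -
  have pon: "partition_on {1..r} (sng r)" unfolding pon_iff sng_def by auto
  have nc: "noncross (sng r)"
    by (rule noncrossI) (auto simp: sng_def)
  have ne: "noencl (sng r) (sng r)" by (rule noenclI) auto
  show ?thesis using pon nc ne unfolding good_def by (auto simp: sng_def)
qed

lemma good_restr: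
  assumes g: "good A (r + e_width A * s) P S" and FP: "efam A r s \<subseteq> P - S"
  shows "good A r (P - efam A r s) S"
proof -
  let ?F = "efam A r s"
  let ?k = "r + e_width A * s"
  have SP: "S \<subseteq> P" using g by (simp add: good_def)
  have blkr: "B \<in> P - ?F \<Longrightarrow> B \<subseteq> {1..r}" for B
  proof
    fix x assume B: "B \<in> P - ?F" and x: "x \<in> B"
    have "x \<in> {1..?k}" using good_blk[OF g, of B] B x by auto
    show "x \<in> {1..r}"
    proof (rule ccontr)
      assume "x \<notin> {1..r}"
      then have "x \<in> {r+1..?k}" using \<open>x \<in> {1..?k}\<close> by auto
      then obtain E where E: "E \<in> ?F" "x \<in> E" using efam_cov by blast
      then have "E \<in> P" using FP by auto
      then have "B = E" using good_disj[OF g _ \<open>E \<in> P\<close> x E(2)] B by auto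
      then show False using B E by auto
    qed
  qed
  have pon: "partition_on {1..r} (P - ?F)"
    unfolding pon_iff
  proof (intro conjI ballI allI impI)
    fix B assume "B \<in> P - ?F"
    then show "B \<noteq> {}" "B \<subseteq> {1..r}" using good_blk[OF g, of B] blkr by auto
  next
    fix x assume x: "x \<in> {1..r}"
    then obtain B where "B \<in> P" "x \<in> B" using good_cov[OF g, of x] by auto
    moreover have "B \<notin> ?F" using efam_gt[of B A r s x] x \<open>x \<in> B\<close> by auto
    ultimately show "\<exists>B\<in>P - ?F. x \<in> B" by blast
  next
    fix B1 B2 x assume "B1 \<in> P - ?F" "B2 \<in> P - ?F" "x \<in> B1" "x \<in> B2"
    then show "B1 = B2" using good_disj[OF g] by blast
  qed
  have SP': "S \<subseteq> P - ?F" using SP FP by auto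
  have nc: "noncross (P - ?F)" using g noncross_mono by (auto simp: good_def)
  have ne: "noencl (P - ?F) S" using g by (auto simp: good_def intro: noencl_mono)
  show ?thesis using pon SP' nc ne g unfolding good_def by auto
qed

lemma efam_sng_disj: "E \<in> efam A r s \<Longrightarrow> E \<notin> sng r"
proof
  assume "E \<in> efam A r s" "E \<in> sng r"
  then obtain i where "E = {i}" "i \<le> r" by (auto simp: sng_def)
  then show False using efam_gt[OF \<open>E \<in> efam A r s\<close>, of i] by auto
qed

lemma d0_eq: "juxt r (id_diag r) (e_pow_diag A s) = mk (sng r \<union> efam A r s) (sng r)"
proof -
  have m: "(sng r \<union> efam A r s) - sng r = efam A r s" using efam_sng_disj by blast
  have "juxt r (id_diag r) (e_pow_diag A s) = id_diag r \<union> (tp ` efam A r s \<union> bt ` efam A r s)"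
    unfolding juxt_def e_pow_eq image_Un image_image juxt_tp juxt_bt efam_sh[of A r s] by simp
  also have "\<dots> = mk (sng r \<union> efam A r s) (sng r)"
    unfolding mk_def m sng_tpbt by blast
  finally show ?thesis .
qed

lemma card_efam: "card (efam A r s) = s"
proof -
  let ?W = "e_width A"
  have W: "?W \<ge> 1" by (rule ew_pos)
  have "inj_on (\<lambda>i. {r + ?W * i + 1 .. r + ?W * i + ?W}) {..<s}"
  proof (rule inj_onI)
    fix i j assume "{r + ?W * i + 1 .. r + ?W * i + ?W} = {r + ?W * j + 1 .. r + ?W * j + ?W}"
    moreover have "r + ?W * i + 1 \<in> {r + ?W * i + 1 .. r + ?W * i + ?W}" "r + ?W * j + 1 \<in> {r + ?W * j + 1 .. r + ?W * j + ?W}"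
      using W by auto
    ultimately have "r + ?W * i + 1 \<in> {r + ?W * j + 1 .. r + ?W * j + ?W}" "r + ?W * j + 1 \<in> {r + ?W * i + 1 .. r + ?W * i + ?W}"
      by simp_all
    then have "?W * i = ?W * j" by auto
    then show "i = j" using W by simp
  qed
  then show ?thesis unfolding efam_def by (simp add: card_image)
qed

lemma finite_Pk: "finite (Pk k)"
proof -
  have "Pk k \<subseteq> Pow (Pow (verts k))" unfolding Pk_def partition_on_def by auto
  moreover have "finite (verts k)" unfolding verts_def by simp
  ultimately show ?thesis by (meson finite_Pow_iff finite_subset)
qed

lemma finite_alg: "finite {d. in_alg A k d}"
  by (rule finite_subset[OF _ finite_Pk]) (auto simp: in_alg_def)

lemma finite_basis: "finite (module_basis A k m)"
  by (rule finite_subset[OF _ finite_alg]) (auto simp: module_basis_def)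

lemma coeff:
  assumes k: "k = r + e_width A * s" and wb: "w \<in> module_basis A k m"
  shows "act_coeff n m (mk (sng r \<union> efam A r s) (sng r)) w w = (if (\<forall>E\<in>efam A r s. tp E \<in> w) then n ^ s else 0)"
proof -
  let ?F = "efam A r s"
  let ?D = "mk (sng r \<union> ?F) (sng r)"
  have g0: "good A k (sng r \<union> ?F) (sng r)" using good_ext[OF good_sng, of A r s] k by simp
  have p0: "partition_on {1..k} (sng r \<union> ?F)" using g0 by (simp add: good_def)
  have Dp: "partition_on (verts k) ?D" using mk_pon[OF p0] by auto
  obtain P S where PS: "good A k P S" "card S = m" "w = mk P S" using wb unfolding module_basis_eq by blast
  have p: "partition_on {1..k} P" and SP: "S \<subseteq> P" using PS by (auto simp: good_def)
  show ?thesis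
  proof (cases "\<forall>E\<in>?F. tp E \<in> w")
    case True
    have FP: "?F \<subseteq> P - S"
    proof
      fix E assume "E \<in> ?F"
      then have "tp E \<in> mk P S" "E \<noteq> {}" using True PS(3) efam_props(2) by auto
      then show "E \<in> P - S" using tp_in_mk[OF p SP] by blast
    qed
    interpret cs k r P S ?F
    proof
      show "\<forall>E\<in>?F. E \<subseteq> {r+1..k}" using efam_props(1) k by blast
      show "r \<le> k" using k by simp
    qed (use p SP FP p0 in auto)
    have tr: "transp_diag ?D = ?D" by (rule transp_mk)
    have c1: "comp_diag ?D w = w" using comp_d0_w unfolding w_def d0_def PS(3) .
    have c2: "comp_diag w ?D = w" using comp_w_d0 unfolding w_def d0_def PS(3) .
    have el: "ell ?D w = s" using ell_d0_w card_efam unfolding w_def d0_def PS(3) by simp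
    have np: "nprop w = m" using nprop_mk[OF p SP] PS by simp
    show ?thesis using True tr c1 c2 el np unfolding act_coeff_def by (simp add: Let_def)
  next
    case False
    then obtain E where E: "E \<in> ?F" "tp E \<notin> w" by blast
    have Ene: "E \<noteq> {}" using efam_props(2)[OF E(1)] .
    have ED: "tp E \<in> ?D" using E(1) efam_sng_disj[OF E(1)] unfolding mk_mem by blast
    have top: "\<forall>v\<in>tp E. fst v" by (auto simp: tp_def)
    have tne: "tp E \<noteq> {}" using Ene by (auto simp: tp_def)
    have uq: "\<forall>B'\<in>?D. B' \<inter> tp E \<noteq> {} \<longrightarrow> B' = tp E" using pon_disj[OF Dp _ ED] by blast
    note t1 = topblock[OF ED tne top uq, of w]
    note t2 = topblock[OF conjunct1[OF t1] tne top conjunct2[OF t1], of "transp_diag ?D"]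
    have "comp_diag (comp_diag ?D w) (transp_diag ?D) \<noteq> w" using t2 E(2) by auto
    then have "act_coeff n m ?D w w = 0" unfolding act_coeff_def Let_def by simp
    then show ?thesis using False by (simp only: if_False)
  qed
qed

lemma count_W:
  assumes k: "k = r + e_width A * s"
  shows "card {w \<in> module_basis A k m. \<forall>E\<in>efam A r s. tp E \<in> w} = card (GG A r m)"
proof -
  let ?F = "efam A r s"
  define phi where "phi = (\<lambda>(Q, S). mk (Q \<union> ?F) S)"
  have QF: "good A r Q S \<Longrightarrow> E \<in> ?F \<Longrightarrow> E \<notin> Q" for Q S E
  proof
    assume g: "good A r Q S" "E \<in> ?F" "E \<in> Q"
    obtain i where "i \<in> E" using efam_props(2)[OF g(2)] by blast
    then show False using good_blk[OF g(1) g(3)] efam_gt[OF g(2) \<open>i \<in> E\<close>] by auto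
  qed
  have eq: "{w \<in> module_basis A k m. \<forall>E\<in>?F. tp E \<in> w} = phi ` GG A r m"
  proof (rule set_eqI, rule iffI)
    fix w assume w: "w \<in> {w \<in> module_basis A k m. \<forall>E\<in>?F. tp E \<in> w}"
    then obtain P S where PS: "good A k P S" "card S = m" "w = mk P S"
      unfolding module_basis_eq by blast
    have p: "partition_on {1..k} P" and SP: "S \<subseteq> P" using PS by (auto simp: good_def)
    have FP: "?F \<subseteq> P - S"
    proof
      fix E assume "E \<in> ?F"
      then have "tp E \<in> mk P S" "E \<noteq> {}" using w PS(3) efam_props(2) by auto
      then show "E \<in> P - S" using tp_in_mk[OF p SP] by blast
    qed
    have "good A r (P - ?F) S" using good_restr[of A r s P S] PS(1) FP k by simp
    then have "(P - ?F, S) \<in> GG A r m" using PS(2) by (simp add: GG_def)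
    moreover have "(P - ?F) \<union> ?F = P" using FP by blast
    then have "phi (P - ?F, S) = w" unfolding phi_def using PS(3) by simp
    ultimately show "w \<in> phi ` GG A r m" by (metis image_eqI)
  next
    fix w assume "w \<in> phi ` GG A r m"
    then obtain Q S where QS: "(Q,S) \<in> GG A r m" "w = mk (Q \<union> ?F) S" unfolding phi_def by auto
    then have g: "good A r Q S" and c: "card S = m" by (auto simp: GG_def)
    have g': "good A k (Q \<union> ?F) S" using good_ext[OF g, of s] k by simp
    have "w \<in> module_basis A k m" unfolding module_basis_eq using g' c QS(2) by blast
    moreover have "tp E \<in> w" if E: "E \<in> ?F" for E
    proof -
      have "E \<notin> S" using QF[OF g E] g by (auto simp: good_def)
      then show ?thesis using QS(2) E by (auto simp: mk_mem)
    qed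
    ultimately show "w \<in> {w \<in> module_basis A k m. \<forall>E\<in>?F. tp E \<in> w}" by blast
  qed
  have inj: "inj_on phi (GG A r m)"
  proof (rule inj_onI, clarify)
    fix Q1 S1 Q2 S2 assume a: "(Q1,S1) \<in> GG A r m" "(Q2,S2) \<in> GG A r m" "phi (Q1,S1) = phi (Q2,S2)"
    then have g: "good A r Q1 S1" "good A r Q2 S2" by (auto simp: GG_def)
    have g1: "good A k (Q1 \<union> ?F) S1" "good A k (Q2 \<union> ?F) S2" using good_ext[OF g(1), of s] good_ext[OF g(2), of s] k by simp_all
    have "Q1 \<union> ?F = Q2 \<union> ?F \<and> S1 = S2"
      by (rule mk_inj[of _ _ S1 _ _ S2]) (use g1 a(3) in \<open>auto simp: good_def phi_def\<close>)
    moreover have "Q1 \<inter> ?F = {}" "Q2 \<inter> ?F = {}" using QF g by blast+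
    ultimately show "Q1 = Q2 \<and> S1 = S2" by blast
  qed
  show ?thesis unfolding eq using card_image[OF inj] .
qed

theorem mainTheorem15:
  fixes A :: alg and n k m r s :: nat
  assumes "n \<ge> 2 * k"
    and "admissible_m A k m"
    and "if A = TL then r + 2 * s = k else r + s = k"
  shows "character A k (real n) m (one_tensor_e A (real n) r s) = real_of_int (F_val A m r)"
proof -
  have k: "k = r + e_width A * s" using assms(3) by (cases A) (auto simp: e_width_def)
  let ?F = "efam A r s"
  let ?D = "mk (sng r \<union> ?F) (sng r)"
  have Deq: "juxt r (id_diag r) (e_pow_diag A s) = ?D" by (rule d0_eq)
  have g0: "good A k (sng r \<union> ?F) (sng r)" using good_ext[OF good_sng, of A r s] k by simp
  have p0: "partition_on {1..k} (sng r \<union> ?F)" using g0 by (simp add: good_def)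
  have Dalg: "in_alg A k ?D" using in_alg_mk[OF p0] g0 by auto
  let ?Wset = "{w \<in> module_basis A k m. \<forall>E\<in>?F. tp E \<in> w}"
  have tr: "diag_trace A k (real n) m ?D = real n ^ s * card ?Wset"
  proof -
    have "diag_trace A k (real n) m ?D = (\<Sum>w\<in>module_basis A k m. if (\<forall>E\<in>?F. tp E \<in> w) then real n ^ s else 0)"
      unfolding diag_trace_def using coeff[OF k] by (intro sum.cong) auto
    also have "\<dots> = (\<Sum>w\<in>?Wset. real n ^ s)"
      by (rule sum.inter_filter[symmetric]) (rule finite_basis)
    also have "\<dots> = real n ^ s * card ?Wset" by simp
    finally show ?thesis .
  qed
  have ch: "character A k (real n) m (one_tensor_e A (real n) r s) = (1 / real n) ^ s * diag_trace A k (real n) m ?D"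
  proof -
    have "character A k (real n) m (one_tensor_e A (real n) r s)
        = (\<Sum>d\<in>{d. in_alg A k d}. if d = ?D then (1 / real n) ^ s * diag_trace A k (real n) m d else 0)"
      unfolding character_def one_tensor_e_def Deq by (intro sum.cong) auto
    also have "\<dots> = (1 / real n) ^ s * diag_trace A k (real n) m ?D"
      using Dalg finite_alg by (simp add: sum.delta')
    finally show ?thesis .
  qed
  have ns: "(1 / real n) ^ s * real n ^ s = 1"
  proof (cases "s = 0")
    case False
    have "e_width A * s \<ge> 1" using ew_pos[of A] False by (simp add: Suc_leI)
    then have "k \<ge> 1" using k by linarith
    then have "real n \<noteq> 0" using assms(1) by auto
    then show ?thesis by (simp add: power_one_over field_simps)
  qed simp
  have par: "A = TL \<Longrightarrow> even (r + m)"
  proof -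
    assume "A = TL"
    then have "m mod 2 = k mod 2" "k = r + 2 * s" using assms(2,3) unfolding admissible_m_def by auto
    then show "even (r + m)" by presburger
  qed
  have "character A k (real n) m (one_tensor_e A (real n) r s) = real (card ?Wset)"
    using ch tr ns by (simp add: mult.assoc[symmetric])
  also have "\<dots> = real (cnt A r m)" using count_W[OF k] card_GG by simp
  also have "\<dots> = real_of_int (F_val A m r)" using F_val_cnt[OF par] by simp
  finally show ?thesis .
qed


end
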